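(* Let $p\in[0,1]$ and let $\{G_n\}$ be a sequence of graphs with a converging giant (with respect to $\mu$ and $p$), $G_n$ having $n$ vertices, and let $v$ be a uniformly random vertex. If $\zeta(p)>0$ then $\lim_{k\to\infty}\limsup_{n\to\infty}\mathbb P(v\notin C_1,\ |C(v)|\ge k)=0$; if $\zeta(p)=0$ then $\lim_{k\to\infty}\limsup_{n\to\infty}\mathbb P(|C(v)|\ge k)=0$. Moreover, for two independent uniformly random vertices $u,v$, $\lim_{k\to\infty}\limsup_{n\to\infty}\mathbb P\big(|C(u)|\ge k,\ |C(v)|\ge k,\ C(u)\ne C(v)\big)=0$. Probabilities are over the graph, percolation and the choice of vertices.
   Context: $\mathcal G_*$: rooted connected locally finite graphs up to root-preserving isomorphism; $\{G_n\}$ converges in probability in the local weak sense to $\mu$ on $\mathcal G_*$ if $\frac1{|V(G_n)|}\sum_vf(G_n,v)\to\int f\,d\mu$ in probability for every bounded $f$ depending only on a bounded-radius ball around the root. $G(p)$ is bond percolation with retention probability $p$, $C(v)$ is the component of $v$ in $G_n(p)$, $C_1$ the largest component of $G_n(p)$, and $\zeta(p)=\int\mathbb P_{G(p)}(|C(o)|=\infty)\,d\mu$. A sequence $\{G_n\}$ of (possibly random) graphs converging in probability in the local weak sense to $\mu$ has a converging giant if $|C_1|/n\to\zeta(p)$ in probability. *)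

theory Defs
  imports "HOL-Probability.Probability"
begin

text \<open>Rooted graphs (elements of G_*) are
  represented by pairs (E, rt); the rooted graph meant is the component of rt.\<close>

type_synonym graph = "nat \<Rightarrow> nat \<Rightarrow> bool"
type_synonym perc_cfg = "nat \<times> nat \<Rightarrow> bool"

definition simple_graph :: "graph \<Rightarrow> bool" where
  "simple_graph E \<longleftrightarrow> (\<forall>x y. E x y \<longrightarrow> E y x) \<and> (\<forall>x. \<not> E x x)"

definition locally_finite :: "graph \<Rightarrow> bool" where
  "locally_finite E \<longleftrightarrow> (\<forall>x. finite {y. E x y})"

definition graph_on :: "nat \<Rightarrow> graph \<Rightarrow> bool" where
  "graph_on n E \<longleftrightarrow> simple_graph E \<and> (\<forall>x y. E x y \<longrightarrow> x < n \<and> y < n)"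

definition ball :: "nat \<Rightarrow> graph \<Rightarrow> nat \<Rightarrow> nat set" where
  "ball r E rt = {w. \<exists>m\<le>r. (E ^^ m) rt w}"

definition ball_iso :: "nat \<Rightarrow> graph \<times> nat \<Rightarrow> graph \<times> nat \<Rightarrow> bool" where
  "ball_iso r G H \<longleftrightarrow> (case G of (E, a) \<Rightarrow> case H of (E', b) \<Rightarrow>
     (\<exists>h. bij_betw h (ball r E a) (ball r E' b) \<and> h a = b \<and>
          (\<forall>x\<in>ball r E a. \<forall>y\<in>ball r E a. E x y \<longleftrightarrow> E' (h x) (h y))))"

definition local_fun :: "nat \<Rightarrow> (graph \<times> nat \<Rightarrow> real) \<Rightarrow> bool" where
  "local_fun r f \<longleftrightarrow> (\<forall>G H. ball_iso r G H \<longrightarrow> f G = f H)"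

definition rg_space :: "(graph \<times> nat) measure" where
  "rg_space = (PiM UNIV (\<lambda>_::nat. PiM UNIV (\<lambda>_::nat. count_space (UNIV :: bool set))))
               \<Otimes>\<^sub>M count_space UNIV"

definition perc :: "graph \<Rightarrow> perc_cfg \<Rightarrow> graph" where
  "perc E \<omega> x y \<longleftrightarrow> E x y \<and> \<omega> (min x y, max x y)"

definition cluster :: "graph \<Rightarrow> perc_cfg \<Rightarrow> nat \<Rightarrow> nat set" where
  "cluster E \<omega> v = {w. (perc E \<omega>)\<^sup>*\<^sup>* v w}"

definition perc_pmf :: "nat \<Rightarrow> real \<Rightarrow> perc_cfg pmf" where
  "perc_pmf n p = Pi_pmf {(x, y). x < y \<and> y < n} False (\<lambda>_. bernoulli_pmf p)"

definition perc_measure :: "real \<Rightarrow> perc_cfg measure" where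
  "perc_measure p = PiM UNIV (\<lambda>_::nat \<times> nat. measure_pmf (bernoulli_pmf p))"

text \<open>zeta(p) = integral over mu of P(|C(o)| = infinity), written via the joint law.\<close>
definition zeta :: "(graph \<times> nat) measure \<Rightarrow> real \<Rightarrow> real" where
  "zeta \<mu> p = measure (\<mu> \<Otimes>\<^sub>M perc_measure p)
                 {((E, rt), \<omega>). infinite (cluster E \<omega> rt)}"

definition lwc_in_prob :: "(nat \<Rightarrow> graph pmf) \<Rightarrow> (graph \<times> nat) measure \<Rightarrow> bool" where
  "lwc_in_prob Gs \<mu> \<longleftrightarrow>
     (\<forall>r f. local_fun r f \<and> f \<in> borel_measurable rg_space \<and> bounded (range f) \<longrightarrow>
        (\<forall>\<epsilon>>0. (\<lambda>n. measure_pmf.prob (Gs n)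
            {E. \<bar>(\<Sum>v<n. f (E, v)) / real n - (\<integral>x. f x \<partial>\<mu>)\<bar> > \<epsilon>}) \<longlonglongrightarrow> 0))"

definition perc_exp :: "(nat \<Rightarrow> graph pmf) \<Rightarrow> real \<Rightarrow> nat \<Rightarrow> (graph \<times> perc_cfg) pmf" where
  "perc_exp Gs p n = bind_pmf (Gs n) (\<lambda>E. map_pmf (\<lambda>\<omega>. (E, \<omega>)) (perc_pmf n p))"

definition is_largest_cluster :: "nat \<Rightarrow> graph \<Rightarrow> perc_cfg \<Rightarrow> nat set \<Rightarrow> bool" where
  "is_largest_cluster n E \<omega> C \<longleftrightarrow>
     (\<exists>v<n. C = cluster E \<omega> v) \<and> (\<forall>w<n. card (cluster E \<omega> w) \<le> card C)"

definition converging_giant ::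
  "(nat \<Rightarrow> graph pmf) \<Rightarrow> (graph \<times> nat) measure \<Rightarrow> real
     \<Rightarrow> (nat \<Rightarrow> graph \<Rightarrow> perc_cfg \<Rightarrow> nat set) \<Rightarrow> bool" where
  "converging_giant Gs \<mu> p C1 \<longleftrightarrow> lwc_in_prob Gs \<mu> \<and>
     (\<forall>\<epsilon>>0. (\<lambda>n. measure_pmf.prob (perc_exp Gs p n)
         {(E, \<omega>). \<bar>real (card (C1 n E \<omega>)) / real n - zeta \<mu> p\<bar> > \<epsilon>}) \<longlonglongrightarrow> 0)"

end

theory Submission
  imports Defs
begin

lemma space_rg: "space rg_space = UNIV"
  by (simp add: rg_space_def space_pair_measure space_PiM PiE_UNIV_domain)

lemma meas_edge[measurable]:
  "(\<lambda>z::graph \<times> nat. fst z x y) \<in> measurable rg_space (count_space UNIV)"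
proof -
  have 1: "(\<lambda>z::graph \<times> nat. fst z) \<in> measurable rg_space (PiM UNIV (\<lambda>_::nat. PiM UNIV (\<lambda>_::nat. count_space (UNIV::bool set))))"
    unfolding rg_space_def by simp
  have 2: "(\<lambda>E::graph. E x) \<in> measurable (PiM UNIV (\<lambda>_::nat. PiM UNIV (\<lambda>_::nat. count_space (UNIV::bool set)))) (PiM UNIV (\<lambda>_::nat. count_space (UNIV::bool set)))"
    by (rule measurable_component_singleton) simp
  have 3: "(\<lambda>e::nat\<Rightarrow>bool. e y) \<in> measurable (PiM UNIV (\<lambda>_::nat. count_space (UNIV::bool set))) (count_space UNIV)"
    by (rule measurable_component_singleton) simp
  show ?thesis using measurable_compose[OF measurable_compose[OF 1 2] 3] by simp
qed

lemma meas_root[measurable]: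
  "(\<lambda>z::graph \<times> nat. snd z) \<in> measurable rg_space (count_space UNIV)"
  unfolding rg_space_def by measurable

lemma pred_relpow: "Measurable.pred rg_space (\<lambda>z. (fst z ^^ m) (snd z) w)"
proof (induction m arbitrary: w)
  case 0
  have "Measurable.pred rg_space (\<lambda>z. snd z = w)" by measurable
  then show ?case by simp
next
  case (Suc m)
  have "(\<lambda>z. (fst z ^^ Suc m) (snd z) w) = (\<lambda>z. \<exists>u. (fst z ^^ m) (snd z) u \<and> fst z u w)"
    by (auto simp: relpowp_Suc_right fun_eq_iff)
  then show ?case using Suc by simp
qed

definition pairsB :: "nat set \<Rightarrow> (nat \<times> nat) set" where
  "pairsB B = {(x,y). x < y \<and> x \<in> B \<and> y \<in> B}"
definition relE :: "(nat \<times> nat) set \<Rightarrow> graph" where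
  "relE R x y \<longleftrightarrow> (x,y) \<in> R"
definition restrE :: "nat set \<Rightarrow> graph \<Rightarrow> (nat \<times> nat) set" where
  "restrE B E = {(x,y). x \<in> B \<and> y \<in> B \<and> E x y}"
definition Dk :: "nat \<Rightarrow> graph \<Rightarrow> nat \<Rightarrow> perc_cfg \<Rightarrow> nat set" where
  "Dk k E v \<omega> = {w. \<exists>m<k. (perc E \<omega> ^^ m) v w}"
definition Qk :: "nat \<Rightarrow> graph \<Rightarrow> nat \<Rightarrow> perc_cfg \<Rightarrow> bool" where
  "Qk k E v \<omega> \<longleftrightarrow> k \<le> card (Dk k E v \<omega>) \<or> infinite (Dk k E v \<omega>)"

lemma leave_set:
  assumes "R\<^sup>*\<^sup>* x y" "x \<in> A" "y \<notin> A"
  shows "\<exists>a b. a \<in> A \<and> b \<notin> A \<and> R a b"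
  using assms by (induction rule: rtranclp_induct) auto

lemma bfs_card:
  fixes R :: "nat \<Rightarrow> nat \<Rightarrow> bool"
  assumes fin: "finite {w. R\<^sup>*\<^sup>* v w}"
  shows "min (Suc j) (card {w. R\<^sup>*\<^sup>* v w}) \<le> card {w. \<exists>m\<le>j. (R ^^ m) v w}"
proof (induction j)
  case 0
  have "{w. \<exists>m\<le>0. (R ^^ m) v w} = {v}" by auto
  then show ?case by simp
next
  case (Suc j)
  let ?C = "{w. R\<^sup>*\<^sup>* v w}"
  let ?D = "\<lambda>j. {w. \<exists>m\<le>j. (R ^^ m) v w}"
  have sub: "?D i \<subseteq> ?C" for i by (auto intro: relpowp_imp_rtranclp)
  have mono: "?D j \<subseteq> ?D (Suc j)" by (auto intro: le_SucI)
  have finD: "finite (?D i)" for i using sub fin finite_subset by blast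
  show ?case
  proof (cases "?D j = ?C")
    case True
    then have "?D (Suc j) = ?C" using sub[of "Suc j"] mono by auto
    then show ?thesis by simp
  next
    case False
    then obtain w where w: "w \<in> ?C" "w \<notin> ?D j" using sub by blast
    have "v \<in> ?D j" by (auto intro: exI[of _ 0])
    then obtain a b where ab: "a \<in> ?D j" "b \<notin> ?D j" "R a b"
      using leave_set[of R v w "?D j"] w by auto
    then obtain m where m: "m \<le> j" "(R ^^ m) v a" by auto
    have "(R ^^ Suc m) v b" using m ab by (auto simp: relpowp_Suc_right)
    then have "b \<in> ?D (Suc j)" using m by (auto intro!: exI[of _ "Suc m"])
    then have "insert b (?D j) \<subseteq> ?D (Suc j)" using mono by auto
    then have "card (insert b (?D j)) \<le> card (?D (Suc j))" using finD by (rule card_mono[rotated])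
    then have "Suc (card (?D j)) \<le> card (?D (Suc j))" using ab finD by simp
    then show ?thesis using Suc by linarith
  qed
qed

lemma Qk_of_cluster:
  assumes "finite (cluster E \<omega> v)" "k \<le> card (cluster E \<omega> v)"
  shows "Qk k E v \<omega>"
proof (cases k)
  case 0 then show ?thesis by (simp add: Qk_def)
next
  case (Suc j)
  have "Dk k E v \<omega> = {w. \<exists>m\<le>j. (perc E \<omega> ^^ m) v w}"
    using Suc by (auto simp: Dk_def less_Suc_eq_le)
  moreover have "min (Suc j) (card (cluster E \<omega> v)) \<le> card {w. \<exists>m\<le>j. (perc E \<omega> ^^ m) v w}"
    using bfs_card[of "perc E \<omega>" v j] assms by (simp add: cluster_def)
  ultimately show ?thesis using assms Suc by (simp add: Qk_def)
qed

lemma Dk_sub_cluster: "Dk k E v \<omega> \<subseteq> cluster E \<omega> v"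
  by (auto simp: Dk_def cluster_def intro: relpowp_imp_rtranclp)

lemma relpow_mono_rel:
  fixes R S :: "nat \<Rightarrow> nat \<Rightarrow> bool"
  assumes "\<And>x y. R x y \<Longrightarrow> S x y"
  shows "(R ^^ m) x y \<Longrightarrow> (S ^^ m) x y"
proof (induction m arbitrary: y)
  case 0 then show ?case by simp
next
  case (Suc m) then show ?case using assms by (auto simp: relpowp_Suc_right)
qed

lemma perc_le: "perc E \<omega> x y \<Longrightarrow> E x y"
  by (simp add: perc_def)

lemma in_ball: "(E ^^ m) v w \<Longrightarrow> m \<le> r \<Longrightarrow> w \<in> ball r E v"
  by (auto simp: ball_def)

lemma ball_step: "x \<in> ball r E v \<Longrightarrow> E x y \<Longrightarrow> y \<in> ball (Suc r) E v"
proof -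
  assume a: "x \<in> ball r E v" "E x y"
  then obtain m where "m \<le> r" "(E ^^ m) v x" by (auto simp: ball_def)
  then have "(E ^^ Suc m) v y" using a by (auto simp: relpowp_Suc_right)
  then show ?thesis using \<open>m \<le> r\<close> by (auto simp: ball_def intro!: exI[of _ "Suc m"])
qed

lemma relpow_agree:
  assumes agree: "\<And>x y. x \<in> ball m0 E v \<Longrightarrow> R1 x y \<longleftrightarrow> R2 x y"
    and le: "\<And>x y. R1 x y \<Longrightarrow> E x y"
    and m: "m \<le> Suc m0"
  shows "(R1 ^^ m) v w \<longleftrightarrow> (R2 ^^ m) v w"
  using m
proof (induction m arbitrary: w)
  case 0 then show ?case by simp
next
  case (Suc m)
  have "(R1 ^^ Suc m) v w \<longleftrightarrow> (\<exists>u. (R1 ^^ m) v u \<and> R1 u w)" by (auto simp: relpowp_Suc_right)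
  also have "\<dots> \<longleftrightarrow> (\<exists>u. (R2 ^^ m) v u \<and> R2 u w)"
  proof -
    have "(R1 ^^ m) v u \<and> R1 u w \<longleftrightarrow> (R2 ^^ m) v u \<and> R2 u w" for u
    proof -
      have ih: "(R1 ^^ m) v u \<longleftrightarrow> (R2 ^^ m) v u" using Suc by simp
      have "(R1 ^^ m) v u \<Longrightarrow> u \<in> ball m0 E v"
        using relpow_mono_rel[of R1 E m v u, OF le] Suc.prems by (auto intro: in_ball)
      then show ?thesis using ih agree by blast
    qed
    then show ?thesis by simp
  qed
  also have "\<dots> \<longleftrightarrow> (R2 ^^ Suc m) v w" by (auto simp: relpowp_Suc_right)
  finally show ?case .
qed

definition bern_pi :: "real \<Rightarrow> (nat \<times> nat) set \<Rightarrow> perc_cfg pmf" where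
  "bern_pi p S = Pi_pmf S False (\<lambda>_. bernoulli_pmf p)"

definition Fk :: "real \<Rightarrow> nat \<Rightarrow> nat \<Rightarrow> nat set \<Rightarrow> (nat \<times> nat) set \<Rightarrow> real" where
  "Fk p k v B R = (if v \<in> B \<and> finite B then
      measure_pmf.prob (bern_pi p (pairsB B)) {\<omega>. Qk k (relE R) v \<omega>} else 0)"

definition fk :: "real \<Rightarrow> nat \<Rightarrow> graph \<times> nat \<Rightarrow> real" where
  "fk p k z = Fk p k (snd z) (ball k (fst z) (snd z)) (restrE (ball k (fst z) (snd z)) (fst z))"

lemma fk_nonneg: "0 \<le> fk p k z" by (simp add: fk_def Fk_def)
lemma fk_le1: "fk p k z \<le> 1" by (simp add: fk_def Fk_def)

lemma root_in_ball: "v \<in> ball k E v"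
  by (auto simp: ball_def intro!: exI[of _ 0])

lemma ball_mono: "r \<le> s \<Longrightarrow> ball r E v \<subseteq> ball s E v"
  unfolding ball_def by (auto intro: order_trans)

lemma relpow_graph_on:
  assumes "graph_on n E" "(E ^^ m) v w" "v < n"
  shows "w < n"
  using assms(2)
proof (induction m arbitrary: w)
  case 0 then show ?case using assms by simp
next
  case (Suc m) then show ?case using assms(1) by (auto simp: relpowp_Suc_right graph_on_def)
qed

lemma ball_graph_on: "graph_on n E \<Longrightarrow> v < n \<Longrightarrow> ball k E v \<subseteq> {..<n}"
  by (auto simp: ball_def dest: relpow_graph_on)

lemma Dk_restr:
  assumes simple: "\<And>x. \<not> E x x" and B: "ball k E v \<subseteq> B"
    and agreeo: "\<And>x y. x \<in> B \<Longrightarrow> y \<in> B \<Longrightarrow> x < y \<Longrightarrow> \<omega>' (x,y) = \<omega> (x,y)"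
  shows "Dk k (relE (restrE B E)) v \<omega>' = Dk k E v \<omega>"
proof (cases k)
  case 0 then show ?thesis by (simp add: Dk_def)
next
  case (Suc j)
  have agree: "perc E \<omega> x y \<longleftrightarrow> perc (relE (restrE B E)) \<omega>' x y" if x: "x \<in> ball j E v" for x y
  proof (cases "E x y")
    case True
    have y: "y \<in> B" using ball_step[OF x True] B Suc by auto
    have xB: "x \<in> B" using x B Suc ball_mono[of j k E v] by auto
    have "x \<noteq> y" using True simple by auto
    then have "\<omega>' (min x y, max x y) = \<omega> (min x y, max x y)"
      using agreeo xB y by (cases "x < y") (auto simp: min_def max_def)
    then show ?thesis using True xB y by (simp add: perc_def relE_def restrE_def)
  next
    case False then show ?thesis by (simp add: perc_def relE_def restrE_def)
  qed
  have "(perc E \<omega> ^^ m) v w \<longleftrightarrow> (perc (relE (restrE B E)) \<omega>' ^^ m) v w" if "m < k" for m w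
    using relpow_agree[of j E v "perc E \<omega>" "perc (relE (restrE B E)) \<omega>'" m w] agree that Suc
    by (auto simp: perc_le)
  then show ?thesis by (auto simp: Dk_def)
qed

lemma finite_side:
  assumes g: "graph_on n E" and v: "v < n"
  shows "measure_pmf.prob (perc_pmf n p) {\<omega>. k \<le> card (cluster E \<omega> v)} \<le> fk p k (E, v)"
proof -
  define B where "B = ball k E v"
  define Sn where "Sn = {(x, y). x < y \<and> y < n}"
  have finSn: "finite Sn"
  proof -
    have "Sn \<subseteq> {..<n} \<times> {..<n}" by (auto simp: Sn_def)
    then show ?thesis using finite_subset by blast
  qed
  have Bn: "B \<subseteq> {..<n}" using ball_graph_on[OF g v] by (simp add: B_def)
  have finB: "finite B" using Bn finite_subset by blast
  have vB: "v \<in> B" by (simp add: B_def root_in_ball)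
  have simple: "\<And>x. \<not> E x x" using g by (simp add: graph_on_def simple_graph_def)
  have sub: "pairsB B \<subseteq> Sn" using Bn by (auto simp: pairsB_def Sn_def)
  let ?rst = "\<lambda>f x. if x \<in> pairsB B then f x else False"
  have fk_eq: "fk p k (E, v) = measure_pmf.prob (perc_pmf n p) {\<omega>. Qk k (relE (restrE B E)) v (?rst \<omega>)}"
  proof -
    have "fk p k (E, v) = measure_pmf.prob (bern_pi p (pairsB B)) {\<omega>. Qk k (relE (restrE B E)) v \<omega>}"
      using vB finB by (simp add: fk_def Fk_def B_def)
    also have "bern_pi p (pairsB B) = map_pmf ?rst (perc_pmf n p)"
      unfolding bern_pi_def perc_pmf_def Sn_def[symmetric]
      by (rule Pi_pmf_subset[OF finSn sub])
    finally show ?thesis by (simp add: vimage_def)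
  qed
  have "{\<omega>. k \<le> card (cluster E \<omega> v)} \<subseteq> {\<omega>. Qk k (relE (restrE B E)) v (?rst \<omega>)}"
  proof safe
    fix \<omega> assume k: "k \<le> card (cluster E \<omega> v)"
    have "cluster E \<omega> v \<subseteq> {..<n}"
    proof
      fix w assume "w \<in> cluster E \<omega> v"
      then obtain m where "(perc E \<omega> ^^ m) v w" by (auto simp: cluster_def rtranclp_power)
      then have "(E ^^ m) v w" by (rule relpow_mono_rel[rotated]) (rule perc_le)
      then show "w \<in> {..<n}" using relpow_graph_on[OF g _ v] by simp
    qed
    then have "finite (cluster E \<omega> v)" using finite_subset by blast
    then have Q: "Qk k E v \<omega>" using Qk_of_cluster k by blast
    have "Dk k (relE (restrE B E)) v (?rst \<omega>) = Dk k E v \<omega>"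
      by (rule Dk_restr[OF simple]) (auto simp: B_def pairsB_def)
    then show "Qk k (relE (restrE B E)) v (?rst \<omega>)" using Q by (simp add: Qk_def)
  qed
  then show ?thesis unfolding fk_eq by (rule measure_pmf.finite_measure_mono) simp
qed

lemma relpow_in_set:
  fixes R :: "nat \<Rightarrow> nat \<Rightarrow> bool"
  assumes "a \<in> B" "\<And>x y. R x y \<Longrightarrow> y \<in> B" "(R ^^ m) a w"
  shows "w \<in> B"
  using assms(3)
proof (induction m arbitrary: w)
  case 0 then show ?case using assms(1) by simp
next
  case (Suc m) then show ?case using assms(2) by (auto simp: relpowp_Suc_right)
qed

lemma relpow_transport:
  fixes R R' :: "nat \<Rightarrow> nat \<Rightarrow> bool"
  assumes bij: "bij_betw h B B'" and a: "a \<in> B"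
    and RB: "\<And>x y. R x y \<Longrightarrow> x \<in> B \<and> y \<in> B"
    and RB': "\<And>x y. R' x y \<Longrightarrow> x \<in> B' \<and> y \<in> B'"
    and corr: "\<And>x y. x \<in> B \<Longrightarrow> y \<in> B \<Longrightarrow> R x y \<longleftrightarrow> R' (h x) (h y)"
  shows "(R' ^^ m) (h a) z \<longleftrightarrow> (\<exists>w. (R ^^ m) a w \<and> z = h w)"
proof (induction m arbitrary: z)
  case 0 then show ?case by auto
next
  case (Suc m)
  have inB: "(R ^^ m) a w \<Longrightarrow> w \<in> B" for w using relpow_in_set[OF a, of R m w] RB by blast
  have "(R' ^^ Suc m) (h a) z \<longleftrightarrow> (\<exists>u. (R' ^^ m) (h a) u \<and> R' u z)"
    by (auto simp: relpowp_Suc_right)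
  also have "\<dots> \<longleftrightarrow> (\<exists>w. (R ^^ m) a w \<and> R' (h w) z)" using Suc by auto
  also have "\<dots> \<longleftrightarrow> (\<exists>w y. (R ^^ m) a w \<and> R w y \<and> z = h y)"
  proof
    assume "\<exists>w. (R ^^ m) a w \<and> R' (h w) z"
    then obtain w where w: "(R ^^ m) a w" "R' (h w) z" by blast
    then have "z \<in> B'" using RB' by blast
    then obtain y where y: "y \<in> B" "z = h y" using bij by (auto simp: bij_betw_def)
    then show "\<exists>w y. (R ^^ m) a w \<and> R w y \<and> z = h y" using w corr inB by blast
  next
    assume "\<exists>w y. (R ^^ m) a w \<and> R w y \<and> z = h y"
    then show "\<exists>w. (R ^^ m) a w \<and> R' (h w) z" using corr RB by blast
  qed
  also have "\<dots> \<longleftrightarrow> (\<exists>w. (R ^^ Suc m) a w \<and> z = h w)"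
    by (auto simp: relpowp_Suc_right)
  finally show ?case .
qed

lemma finite_pairsB: "finite B \<Longrightarrow> finite (pairsB B)"
proof -
  assume "finite B"
  moreover have "pairsB B \<subseteq> B \<times> B" by (auto simp: pairsB_def)
  ultimately show ?thesis using finite_subset by blast
qed

lemma minmax_eq:
  fixes a b c d :: nat
  assumes "min a b = min c d" "max a b = max c d"
  shows "(a = c \<and> b = d) \<or> (a = d \<and> b = c)"
  using assms by (auto simp: min_def max_def split: if_splits)

lemma fk_local: "local_fun k (fk p k)"
  unfolding local_fun_def
proof (intro allI impI)
  fix G Hg :: "graph \<times> nat" assume iso: "ball_iso k G Hg"
  obtain E a where G: "G = (E, a)" by (cases G)
  obtain E' b where Hg: "Hg = (E', b)" by (cases Hg)
  define B where "B = ball k E a"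
  define B' where "B' = ball k E' b"
  obtain h where h: "bij_betw h B B'" "h a = b" "\<And>x y. x \<in> B \<Longrightarrow> y \<in> B \<Longrightarrow> E x y \<longleftrightarrow> E' (h x) (h y)"
    using iso by (auto simp: ball_iso_def G Hg B_def B'_def)
  have aB: "a \<in> B" by (simp add: B_def root_in_ball)
  have bB: "b \<in> B'" by (simp add: B'_def root_in_ball)
  have finiff: "finite B \<longleftrightarrow> finite B'" using h(1) bij_betw_finite by blast
  show "fk p k G = fk p k Hg"
  proof (cases "finite B")
    case False
    then show ?thesis using finiff by (simp add: G Hg fk_def Fk_def B_def B'_def)
  next
    case finB: True
    define R where "R = restrE B E"
    define R' where "R' = restrE B' E'"
    define H where "H = (\<lambda>z. if z \<in> pairsB B then (min (h (fst z)) (h (snd z)), max (h (fst z)) (h (snd z))) else (1::nat, 0::nat))"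
    have inj: "inj_on h B" using h(1) by (simp add: bij_betw_def)
    have img: "h ` B = B'" using h(1) by (simp add: bij_betw_def)
    have bijH: "bij_betw H (pairsB B) (pairsB B')"
    proof (rule bij_betw_imageI)
      show "inj_on H (pairsB B)"
      proof (rule inj_onI)
        fix z1 z2 assume z: "z1 \<in> pairsB B" "z2 \<in> pairsB B" "H z1 = H z2"
        obtain x y x' y' where zz: "z1 = (x,y)" "z2 = (x',y')" by (cases z1, cases z2)
        have "(h x = h x' \<and> h y = h y') \<or> (h x = h y' \<and> h y = h x')"
          using z zz minmax_eq[of "h x" "h y" "h x'" "h y'"] by (simp add: H_def)
        then have "(x = x' \<and> y = y') \<or> (x = y' \<and> y = x')"
          using z zz inj by (auto simp: pairsB_def inj_on_def)
        then show "z1 = z2" using z zz by (auto simp: pairsB_def)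
      qed
      show "H ` pairsB B = pairsB B'"
      proof
        show "H ` pairsB B \<subseteq> pairsB B'"
        proof
          fix z assume "z \<in> H ` pairsB B"
          then obtain x y where xy: "(x,y) \<in> pairsB B" "z = H (x,y)" by auto
          then have "h x \<noteq> h y" "h x \<in> B'" "h y \<in> B'" using inj img by (auto simp: pairsB_def inj_on_def)
          then show "z \<in> pairsB B'" using xy by (auto simp: H_def pairsB_def min_def max_def)
        qed
        show "pairsB B' \<subseteq> H ` pairsB B"
        proof
          fix z assume z: "z \<in> pairsB B'"
          then obtain x' y' where "z = (x',y')" "x' < y'" "x' \<in> B'" "y' \<in> B'" by (auto simp: pairsB_def)
          then obtain x y where xy: "x \<in> B" "y \<in> B" "x' = h x" "y' = h y" using img by auto
          then have "x \<noteq> y" using \<open>x' < y'\<close> by auto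
          then have "(min x y, max x y) \<in> pairsB B" using xy by (auto simp: pairsB_def min_def max_def)
          moreover have "H (min x y, max x y) = z"
            using \<open>z = (x',y')\<close> \<open>x' < y'\<close> xy \<open>(min x y, max x y) \<in> pairsB B\<close>
            by (cases "x < y") (auto simp: H_def min_def max_def)
          ultimately show "z \<in> H ` pairsB B" by (metis image_eqI)
        qed
      qed
    qed
    have outH: "x \<notin> pairsB B \<Longrightarrow> H x \<notin> pairsB B'" for x by (simp add: H_def pairsB_def)
    have finPB: "finite (pairsB B)"
    proof -
      have "pairsB B \<subseteq> B \<times> B" by (auto simp: pairsB_def)
      then show ?thesis using finB finite_subset by blast
    qed
    have eqpmf: "bern_pi p (pairsB B) = map_pmf (\<lambda>g. g \<circ> H) (bern_pi p (pairsB B'))"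
      unfolding bern_pi_def by (rule Pi_pmf_bij_betw[OF finPB bijH outH])
    have key: "Qk k (relE R) a (g \<circ> H) \<longleftrightarrow> Qk k (relE R') b g"
      if g: "g \<in> set_pmf (bern_pi p (pairsB B'))" for g
    proof -
      have gout: "\<And>z. z \<notin> pairsB B' \<Longrightarrow> g z = False"
      proof -
        have "finite (pairsB B')" using finiff finB finite_pairsB by blast
        then show "\<And>z. z \<notin> pairsB B' \<Longrightarrow> g z = False"
          using g set_Pi_pmf_subset[of "pairsB B'" False "\<lambda>_. bernoulli_pmf p"]
          by (auto simp: bern_pi_def)
      qed
      let ?P = "perc (relE R) (g \<circ> H)" and ?P' = "perc (relE R') g"
      have PB: "?P x y \<Longrightarrow> x \<in> B \<and> y \<in> B" for x y by (simp add: perc_def relE_def R_def restrE_def)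
      have PB': "?P' x y \<Longrightarrow> x \<in> B' \<and> y \<in> B'" for x y by (simp add: perc_def relE_def R'_def restrE_def)
      have corr: "?P x y \<longleftrightarrow> ?P' (h x) (h y)" if xy: "x \<in> B" "y \<in> B" for x y
      proof (cases "x = y")
        case True
        have "(x,x) \<notin> pairsB B" "(h x, h x) \<notin> pairsB B'" by (auto simp: pairsB_def)
        then show ?thesis using True gout[of "(1,0)"] gout[of "(h x, h x)"]
          by (simp add: perc_def H_def pairsB_def)
      next
        case False
        have hxy: "h x \<in> B'" "h y \<in> B'" using xy img by auto
        have inP: "(min x y, max x y) \<in> pairsB B" using False xy by (auto simp: pairsB_def min_def max_def)
        have "H (min x y, max x y) = (min (h x) (h y), max (h x) (h y))"
          using inP by (cases "x < y") (auto simp: H_def min_def max_def)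
        then show ?thesis using xy hxy h(3)[OF xy]
          by (simp add: perc_def relE_def R_def R'_def restrE_def)
      qed
      have tr: "(?P' ^^ m) b z \<longleftrightarrow> (\<exists>w. (?P ^^ m) a w \<and> z = h w)" for m z
        using relpow_transport[OF h(1) aB, of ?P ?P' m z] PB PB' corr h(2) by blast
      have D': "Dk k (relE R') b g = h ` Dk k (relE R) a (g \<circ> H)"
        using tr by (auto simp: Dk_def)
      have DB: "Dk k (relE R) a (g \<circ> H) \<subseteq> B"
        using relpow_in_set[OF aB, of ?P] PB by (auto simp: Dk_def)
      have inj': "inj_on h (Dk k (relE R) a (g \<circ> H))" using inj DB inj_on_subset by blast
      show ?thesis unfolding Qk_def D' using card_image[OF inj'] finite_image_iff[OF inj'] by simp
    qed
    have "fk p k G = measure_pmf.prob (bern_pi p (pairsB B)) {\<omega>. Qk k (relE R) a \<omega>}"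
      using aB finB by (simp add: G fk_def Fk_def B_def R_def)
    also have "\<dots> = measure_pmf.prob (bern_pi p (pairsB B')) {g. Qk k (relE R) a (g \<circ> H)}"
      by (simp add: eqpmf vimage_def)
    also have "\<dots> = measure_pmf.prob (bern_pi p (pairsB B')) {g. Qk k (relE R') b g}"
      using key by (intro measure_prob_cong_0) (auto simp: set_pmf_eq)
    also have "\<dots> = fk p k Hg"
      using bB finB finiff by (simp add: Hg fk_def Fk_def B'_def R'_def)
    finally show ?thesis .
  qed
qed

lemma pred_in_ball[measurable]: "Measurable.pred rg_space (\<lambda>z. w \<in> ball k (fst z) (snd z))"
proof -
  have "(\<lambda>z. w \<in> ball k (fst z) (snd z)) = (\<lambda>z. \<exists>m\<in>{..k}. (fst z ^^ m) (snd z) w)"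
    by (auto simp: ball_def fun_eq_iff)
  moreover have "Measurable.pred rg_space (\<lambda>z. \<exists>m\<in>{..k}. (fst z ^^ m) (snd z) w)"
    using pred_relpow by measurable
  ultimately show ?thesis by simp
qed

definition keyk :: "nat \<Rightarrow> graph \<times> nat \<Rightarrow> nat \<times> nat set \<times> (nat \<times> nat) set" where
  "keyk k z = (if finite (ball k (fst z) (snd z)) then
     (snd z, ball k (fst z) (snd z), restrE (ball k (fst z) (snd z)) (fst z)) else (snd z, {}, {}))"

definition Kset :: "(nat \<times> nat set \<times> (nat \<times> nat) set) set" where
  "Kset = UNIV \<times> {B. finite B} \<times> {R. finite R}"

lemma countable_Kset: "countable Kset"
  unfolding Kset_def
  by (intro countable_SIGMA countable_Collect_finite) auto

lemma restrE_finite: "finite B \<Longrightarrow> finite (restrE B E)"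
proof -
  assume "finite B"
  moreover have "restrE B E \<subseteq> B \<times> B" by (auto simp: restrE_def)
  ultimately show ?thesis using finite_subset by blast
qed

lemma keyk_eq_nonempty: "finite B0 \<Longrightarrow> B0 \<noteq> {} \<Longrightarrow> keyk k z = (v0,B0,R0) \<longleftrightarrow> snd z = v0 \<and> ball k (fst z) (snd z) = B0 \<and> restrE B0 (fst z) = R0"
  by (auto simp: keyk_def)

lemma set_eq_pred: "A = B \<longleftrightarrow> (\<forall>w. (w\<in>A \<longrightarrow> w\<in>B) \<and> (w\<in>B \<longrightarrow> w\<in>A))"
  by blast

lemma restrE_eq: "restrE B0 E = R0 \<longleftrightarrow> (\<forall>x y. ((x,y) \<in> R0 \<longrightarrow> x \<in> B0 \<and> y \<in> B0 \<and> E x y) \<and> (x \<in> B0 \<and> y \<in> B0 \<and> E x y \<longrightarrow> (x,y) \<in> R0))"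
  by (auto simp: restrE_def)

lemma keyk_meas: "keyk k \<in> measurable rg_space (count_space Kset)"
proof (subst measurable_count_space_eq_countable[OF countable_Kset], safe)
  fix z show "keyk k z \<in> Kset" by (simp add: keyk_def Kset_def restrE_finite)
next
  fix v0 B0 R0 assume "(v0, B0, R0) \<in> Kset"
  then have finB0: "finite B0" by (simp add: Kset_def)
  show "keyk k -` {(v0, B0, R0)} \<inter> space rg_space \<in> sets rg_space"
  proof (cases "B0 = {}")
    case True
    have "keyk k -` {(v0, B0, R0)} \<inter> space rg_space =
       {z \<in> space rg_space. snd z = v0 \<and> R0 = {} \<and> (\<forall>N. \<exists>w\<ge>N. w \<in> ball k (fst z) (snd z))}"
    proof -
      have "keyk k z = (v0, B0, R0) \<longleftrightarrow> snd z = v0 \<and> R0 = {} \<and> infinite (ball k (fst z) (snd z))" for z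
        using root_in_ball[of "snd z" k "fst z"] True by (auto simp: keyk_def)
      then have "keyk k z = (v0, B0, R0) \<longleftrightarrow> snd z = v0 \<and> R0 = {} \<and> (\<forall>N. \<exists>w\<ge>N. w \<in> ball k (fst z) (snd z))" for z
        by (simp only: infinite_nat_iff_unbounded_le)
      then show ?thesis by (simp only: set_eq_iff vimage_def Int_iff mem_Collect_eq singleton_iff space_rg UNIV_I simp_thms)
    qed
    also have "\<dots> \<in> sets rg_space" by measurable
    finally show ?thesis .
  next
    case False
    have eqz: "keyk k z = (v0, B0, R0) \<longleftrightarrow> snd z = v0 \<and> (\<forall>w. (w \<in> ball k (fst z) (snd z) \<longrightarrow> w \<in> B0) \<and> (w \<in> B0 \<longrightarrow> w \<in> ball k (fst z) (snd z)))
           \<and> (\<forall>x y. ((x,y) \<in> R0 \<longrightarrow> x \<in> B0 \<and> y \<in> B0 \<and> fst z x y) \<and> (x \<in> B0 \<and> y \<in> B0 \<and> fst z x y \<longrightarrow> (x,y) \<in> R0))" for z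
      by (simp only: keyk_eq_nonempty[OF finB0 False] set_eq_pred[of "ball k (fst z) (snd z)" B0] restrE_eq)
    have "keyk k -` {(v0, B0, R0)} \<inter> space rg_space =
       {z \<in> space rg_space. snd z = v0 \<and> (\<forall>w. (w \<in> ball k (fst z) (snd z) \<longrightarrow> w \<in> B0) \<and> (w \<in> B0 \<longrightarrow> w \<in> ball k (fst z) (snd z)))
           \<and> (\<forall>x y. ((x,y) \<in> R0 \<longrightarrow> x \<in> B0 \<and> y \<in> B0 \<and> fst z x y) \<and> (x \<in> B0 \<and> y \<in> B0 \<and> fst z x y \<longrightarrow> (x,y) \<in> R0))}"
      by (simp only: set_eq_iff vimage_def Int_iff mem_Collect_eq singleton_iff space_rg UNIV_I simp_thms eqz)
    also have "\<dots> \<in> sets rg_space" by measurable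
    finally show ?thesis .
  qed
qed

lemma fk_keyk: "fk p k z = (\<lambda>(v,B,R). Fk p k v B R) (keyk k z)"
  by (auto simp: fk_def keyk_def Fk_def)

lemma fk_meas: "fk p k \<in> borel_measurable rg_space"
proof -
  have "(\<lambda>z. (\<lambda>(v,B,R). Fk p k v B R) (keyk k z)) \<in> borel_measurable rg_space"
    by (rule measurable_compose[OF keyk_meas]) simp
  then show ?thesis by (simp add: fk_keyk[abs_def])
qed

lemma perc_pps: "product_prob_space (\<lambda>_::nat \<times> nat. measure_pmf (bernoulli_pmf p))"
  by (intro product_prob_spaceI) (simp add: measure_pmf.prob_space_axioms)

lemma prob_space_perc: "prob_space (perc_measure p)"
proof -
  interpret PS: product_prob_space "\<lambda>_::nat \<times> nat. measure_pmf (bernoulli_pmf p)" UNIV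
    by (rule perc_pps)
  show ?thesis unfolding perc_measure_def by (rule PS.P.prob_space_axioms)
qed

lemma space_perc: "space (perc_measure p) = UNIV"
  by (simp add: perc_measure_def space_PiM PiE_UNIV_domain)

lemma perc_comp_meas[measurable]: "(\<lambda>\<omega>. \<omega> x) \<in> measurable (perc_measure p) (count_space UNIV)"
proof -
  have "(\<lambda>\<omega>. \<omega> x) \<in> measurable (perc_measure p) (measure_pmf (bernoulli_pmf p))"
    unfolding perc_measure_def by (rule measurable_component_singleton) simp
  moreover have st: "sets (measure_pmf (bernoulli_pmf p)) = sets (count_space UNIV)" by simp
  ultimately show ?thesis using measurable_cong_sets[OF refl st, of "perc_measure p"] by simp
qed

lemma perc_pred_comp[measurable]: "Measurable.pred (perc_measure p) (\<lambda>\<omega>. \<omega> x = b)"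
  using measurable_sets[OF perc_comp_meas, of "{b}" x p]
  by (simp add: pred_def vimage_def Int_def conj_commute)

lemma perc_link:
  assumes fin: "finite S"
    and dep: "\<And>\<omega> \<omega>'. (\<forall>x\<in>S. \<omega> x = \<omega>' x) \<Longrightarrow> P \<omega> = P \<omega>'"
  shows "{\<omega>. P \<omega>} \<in> sets (perc_measure p)"
    and "measure (perc_measure p) {\<omega>. P \<omega>} = measure_pmf.prob (bern_pi p S) {\<omega>. P \<omega>}"
proof -
  interpret PS: product_prob_space "\<lambda>_::nat \<times> nat. measure_pmf (bernoulli_pmf p)" UNIV
    by (rule perc_pps)
  define G where "G = {g \<in> PiE_dflt S False (\<lambda>_. UNIV). P g}"
  have finG: "finite G" unfolding G_def using fin by (intro finite_subset[OF _ finite_PiE_dflt]) auto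
  define cyl where "cyl g = {\<omega> \<in> space (perc_measure p). \<forall>x\<in>S. \<omega> x = g x}" for g :: perc_cfg
  have cyl_sets: "cyl g \<in> sets (perc_measure p)" for g
    unfolding cyl_def using fin by measurable
  have cyl_meas: "measure (perc_measure p) (cyl g) = (\<Prod>x\<in>S. pmf (bernoulli_pmf p) (g x))" for g
  proof -
    have "emeasure (perc_measure p) (cyl g) = (\<Prod>x\<in>S. emeasure (measure_pmf (bernoulli_pmf p)) {g x})"
    proof -
      have "cyl g = {\<omega> \<in> space (PiM UNIV (\<lambda>_::nat \<times> nat. measure_pmf (bernoulli_pmf p))). \<forall>x\<in>S. \<omega> x \<in> {g x}}"
        by (simp add: cyl_def perc_measure_def)
      then show ?thesis unfolding perc_measure_def using fin by (simp only:) (intro PS.emeasure_PiM_Collect, auto)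
    qed
    also have "\<dots> = ennreal (\<Prod>x\<in>S. pmf (bernoulli_pmf p) (g x))"
      by (simp add: emeasure_pmf_single prod_ennreal)
    finally have h: "emeasure (perc_measure p) (cyl g) = ennreal (\<Prod>x\<in>S. pmf (bernoulli_pmf p) (g x))" .
    have nn: "0 \<le> (\<Prod>x\<in>S. pmf (bernoulli_pmf p) (g x))" by (intro prod_nonneg) auto
    have "emeasure (perc_measure p) (cyl g) = ennreal (measure (perc_measure p) (cyl g))"
      unfolding perc_measure_def by (simp add: PS.P.emeasure_eq_measure)
    then show ?thesis using h nn by (simp add: ennreal_inj)
  qed
  have U: "{\<omega>. P \<omega>} = (\<Union>g\<in>G. cyl g)"
  proof safe
    fix \<omega> assume "P \<omega>"
    define g where "g = (\<lambda>x. if x \<in> S then \<omega> x else False)"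
    have "P g" using dep[of g \<omega>] \<open>P \<omega>\<close> by (simp add: g_def)
    then have "g \<in> G" by (auto simp: G_def PiE_dflt_def g_def)
    moreover have "\<omega> \<in> cyl g" by (simp add: cyl_def g_def space_perc)
    ultimately show "\<omega> \<in> (\<Union>g\<in>G. cyl g)" by blast
  next
    fix \<omega> g assume "g \<in> G" "\<omega> \<in> cyl g"
    then show "P \<omega>" using dep[of \<omega> g] by (auto simp: G_def cyl_def)
  qed
  show "{\<omega>. P \<omega>} \<in> sets (perc_measure p)"
    unfolding U using finG cyl_sets by auto
  have disj: "disjoint_family_on cyl G"
  proof (unfold disjoint_family_on_def, intro ballI impI)
    fix g g' assume "g \<in> G" "g' \<in> G" "g \<noteq> g'"
    then have "\<exists>x. g x \<noteq> g' x" by (auto simp: fun_eq_iff)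
    then obtain x where x: "g x \<noteq> g' x" by blast
    have "x \<in> S"
    proof (rule ccontr)
      assume "x \<notin> S"
      then have "g x = False" "g' x = False" using \<open>g \<in> G\<close> \<open>g' \<in> G\<close> unfolding G_def PiE_dflt_def by blast+
      then show False using x by simp
    qed
    then show "cyl g \<inter> cyl g' = {}" using x by (auto simp: cyl_def)
  qed
  have "measure (perc_measure p) {\<omega>. P \<omega>} = (\<Sum>g\<in>G. measure (perc_measure p) (cyl g))"
    unfolding U perc_measure_def
    by (rule PS.P.finite_measure_finite_Union[OF finG _ disj[unfolded perc_measure_def]])
       (use cyl_sets in \<open>auto simp: perc_measure_def\<close>)
  also have "\<dots> = (\<Sum>g\<in>G. pmf (bern_pi p S) g)"
  proof (intro sum.cong refl)
    fix g assume "g \<in> G"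
    then have "\<And>x. x \<notin> S \<Longrightarrow> g x = False" by (auto simp: G_def PiE_dflt_def)
    then show "measure (perc_measure p) (cyl g) = pmf (bern_pi p S) g"
      unfolding cyl_meas bern_pi_def by (simp add: pmf_Pi'[OF fin])
  qed
  also have "\<dots> = measure_pmf.prob (bern_pi p S) G"
    by (simp add: measure_measure_pmf_finite finG)
  also have "\<dots> = measure_pmf.prob (bern_pi p S) {\<omega>. P \<omega>}"
  proof (rule measure_prob_cong_0)
    fix x assume "x \<in> {\<omega>. P \<omega>} - G"
    then have "\<exists>y. y \<notin> S \<and> x y \<noteq> False" by (auto simp: G_def PiE_dflt_def)
    then show "pmf (bern_pi p S) x = 0" unfolding bern_pi_def using fin by (intro pmf_Pi_outside) auto
  qed (auto simp: G_def)
  finally show "measure (perc_measure p) {\<omega>. P \<omega>} = measure_pmf.prob (bern_pi p S) {\<omega>. P \<omega>}" .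
qed

definition PSp :: "real \<Rightarrow> ((graph \<times> nat) \<times> perc_cfg) measure" where
  "PSp p = rg_space \<Otimes>\<^sub>M perc_measure p"

lemma psp_edge[measurable]: "(\<lambda>z::(graph \<times> nat) \<times> perc_cfg. fst (fst z) x y) \<in> measurable (PSp p) (count_space UNIV)"
  unfolding PSp_def using meas_edge by measurable

lemma psp_root[measurable]: "(\<lambda>z::(graph \<times> nat) \<times> perc_cfg. snd (fst z)) \<in> measurable (PSp p) (count_space UNIV)"
  unfolding PSp_def using meas_root by measurable

lemma psp_omega[measurable]: "(\<lambda>z::(graph \<times> nat) \<times> perc_cfg. snd z c) \<in> measurable (PSp p) (count_space UNIV)"
  unfolding PSp_def using perc_comp_meas by measurable

lemma psp_perc: "Measurable.pred (PSp p) (\<lambda>z. perc (fst (fst z)) (snd z) x y)"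
  unfolding perc_def by measurable

lemma psp_relpow: "Measurable.pred (PSp p) (\<lambda>z. (perc (fst (fst z)) (snd z) ^^ m) (snd (fst z)) w)"
proof (induction m arbitrary: w)
  case 0
  have "Measurable.pred (PSp p) (\<lambda>z. snd (fst z) = w)" by measurable
  then show ?case by simp
next
  case (Suc m)
  have "(\<lambda>z. (perc (fst (fst z)) (snd z) ^^ Suc m) (snd (fst z)) w) =
        (\<lambda>z. \<exists>u. (perc (fst (fst z)) (snd z) ^^ m) (snd (fst z)) u \<and> perc (fst (fst z)) (snd z) u w)"
    by (auto simp: relpowp_Suc_right fun_eq_iff)
  then show ?case using Suc psp_perc by simp
qed

lemma psp_incl: "Measurable.pred (PSp p) (\<lambda>z. w \<in> cluster (fst (fst z)) (snd z) (snd (fst z)))"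
proof -
  have "(\<lambda>z. w \<in> cluster (fst (fst z)) (snd z) (snd (fst z))) =
        (\<lambda>z. \<exists>m. (perc (fst (fst z)) (snd z) ^^ m) (snd (fst z)) w)"
    by (simp add: cluster_def rtranclp_power fun_eq_iff)
  then show ?thesis using psp_relpow by simp
qed

lemma big_iff: "(k \<le> card C \<or> infinite C) \<longleftrightarrow> (\<exists>F\<in>{F. finite F \<and> card F = k}. \<forall>w\<in>F. w \<in> C)"
proof
  assume "k \<le> card C \<or> infinite C"
  then show "\<exists>F\<in>{F. finite F \<and> card F = k}. \<forall>w\<in>F. w \<in> C"
  proof
    assume "k \<le> card C"
    then obtain T where "T \<subseteq> C" "card T = k" "finite T" by (rule obtain_subset_with_card_n)
    then show ?thesis by blast
  next
    assume "infinite C"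
    then show ?thesis using infinite_arbitrarily_large[of C k] by blast
  qed
next
  assume "\<exists>F\<in>{F. finite F \<and> card F = k}. \<forall>w\<in>F. w \<in> C"
  then obtain F where F: "finite F" "card F = k" "F \<subseteq> C" by blast
  show "k \<le> card C \<or> infinite C"
  proof (cases "finite C")
    case True then show ?thesis using card_mono[OF True F(3)] F by simp
  qed simp
qed

definition Gk :: "nat \<Rightarrow> ((graph \<times> nat) \<times> perc_cfg) set" where
  "Gk k = {z. k \<le> card (cluster (fst (fst z)) (snd z) (snd (fst z))) \<or> infinite (cluster (fst (fst z)) (snd z) (snd (fst z)))}"

lemma countable_cardk: "countable {F::nat set. finite F \<and> card F = k}"
  by (rule countable_subset[OF _ countable_Collect_finite]) auto

lemma space_PSp: "space (PSp p) = UNIV"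
  by (simp add: PSp_def space_pair_measure space_rg space_perc)

lemma Gk_sets: "Gk k \<in> sets (PSp p)"
proof -
  have "Gk k = {z \<in> space (PSp p). \<exists>F\<in>{F. finite F \<and> card F = k}. \<forall>w\<in>F. w \<in> cluster (fst (fst z)) (snd z) (snd (fst z))}"
    unfolding Gk_def space_PSp by (simp only: big_iff) simp
  also have "\<dots> \<in> sets (PSp p)"
    using countable_cardk psp_incl by measurable
  finally show ?thesis .
qed

lemma Ginf_sets: "{z. infinite (cluster (fst (fst z)) (snd z) (snd (fst z)))} \<in> sets (PSp p)"
proof -
  have "{z. infinite (cluster (fst (fst z)) (snd z) (snd (fst z)))} = (\<Inter>k. Gk k)"
  proof (intro equalityI subsetI)
    fix z assume "z \<in> {z. infinite (cluster (fst (fst z)) (snd z) (snd (fst z)))}"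
    then show "z \<in> (\<Inter>k. Gk k)" by (simp add: Gk_def)
  next
    fix z assume z: "z \<in> (\<Inter>k. Gk k)"
    show "z \<in> {z. infinite (cluster (fst (fst z)) (snd z) (snd (fst z)))}"
    unfolding mem_Collect_eq
    proof
      assume fin: "finite (cluster (fst (fst z)) (snd z) (snd (fst z)))"
      have "z \<in> Gk (Suc (card (cluster (fst (fst z)) (snd z) (snd (fst z)))))" using z by blast
      then show False using fin by (simp add: Gk_def)
    qed
  qed
  then show ?thesis using Gk_sets by (simp add: sets.countable_INT')
qed

lemma relpow_finite:
  assumes "locally_finite E"
  shows "finite {w. (E ^^ m) v w}"
proof (induction m)
  case 0 then show ?case by simp
next
  case (Suc m)
  have "{w. (E ^^ Suc m) v w} = (\<Union>u\<in>{w. (E ^^ m) v w}. {y. E u y})"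
    by (auto simp: relpowp_Suc_right)
  then show ?case using Suc assms by (simp add: locally_finite_def)
qed

lemma ball_finite: "locally_finite E \<Longrightarrow> finite (ball k E v)"
proof -
  assume lf: "locally_finite E"
  have "ball k E v = (\<Union>m\<in>{..k}. {w. (E ^^ m) v w})" by (auto simp: ball_def)
  then show ?thesis using relpow_finite[OF lf] by simp
qed

lemma fk_le_slice:
  assumes noloop: "\<And>x. \<not> E x x" and lf: "locally_finite E"
  shows "fk p k (E, v) \<le> measure (perc_measure p) (Pair (E, v) -` Gk k)"
proof -
  define B where "B = ball k E v"
  define R where "R = restrE B E"
  have finB: "finite B" using ball_finite[OF lf] by (simp add: B_def)
  have vB: "v \<in> B" by (simp add: B_def root_in_ball)
  have dep: "Qk k (relE R) v \<omega> = Qk k (relE R) v \<omega>'" if agree: "\<forall>x\<in>pairsB B. \<omega> x = \<omega>' x" for \<omega> \<omega>'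
  proof -
    have "perc (relE R) \<omega> = perc (relE R) \<omega>'"
    proof (intro ext)
      fix x y
      show "perc (relE R) \<omega> x y = perc (relE R) \<omega>' x y"
      proof (cases "(x,y) \<in> R")
        case True
        then have "x \<in> B" "y \<in> B" "x \<noteq> y" using noloop by (auto simp: R_def restrE_def)
        then have "(min x y, max x y) \<in> pairsB B" by (auto simp: pairsB_def min_def max_def)
        then show ?thesis using agree by (simp add: perc_def relE_def)
      next
        case False then show ?thesis by (simp add: perc_def relE_def)
      qed
    qed
    then show ?thesis by (simp add: Qk_def Dk_def)
  qed
  have "fk p k (E, v) = measure_pmf.prob (bern_pi p (pairsB B)) {\<omega>. Qk k (relE R) v \<omega>}"
    using vB finB by (simp add: fk_def Fk_def B_def R_def)
  also have "\<dots> = measure (perc_measure p) {\<omega>. Qk k (relE R) v \<omega>}"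
    using perc_link(2)[OF finite_pairsB[OF finB], of "Qk k (relE R) v"] dep by simp
  also have "\<dots> \<le> measure (perc_measure p) (Pair (E, v) -` Gk k)"
  proof (rule finite_measure.finite_measure_mono[OF prob_space.finite_measure[OF prob_space_perc]])
    show "Pair (E, v) -` Gk k \<in> sets (perc_measure p)"
      using sets_Pair1[OF Gk_sets[of k p, unfolded PSp_def]] .
    show "{\<omega>. Qk k (relE R) v \<omega>} \<subseteq> Pair (E, v) -` Gk k"
    proof
      fix \<omega> assume Q: "\<omega> \<in> {\<omega>. Qk k (relE R) v \<omega>}"
      have "Dk k (relE R) v \<omega> \<subseteq> Dk k E v \<omega>"
      proof -
        have "perc (relE R) \<omega> x y \<Longrightarrow> perc E \<omega> x y" for x y
          by (auto simp: perc_def relE_def R_def restrE_def)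
        then show ?thesis unfolding Dk_def using relpow_mono_rel by blast
      qed
      then have sub: "Dk k (relE R) v \<omega> \<subseteq> cluster E \<omega> v" using Dk_sub_cluster by blast
      show "\<omega> \<in> Pair (E, v) -` Gk k"
      proof (cases "finite (cluster E \<omega> v)")
        case True
        then have "finite (Dk k (relE R) v \<omega>)" using sub finite_subset by blast
        then have "k \<le> card (Dk k (relE R) v \<omega>)" using Q by (simp add: Qk_def)
        also have "\<dots> \<le> card (cluster E \<omega> v)" using card_mono[OF True sub] .
        finally show ?thesis by (simp add: Gk_def)
      next
        case False then show ?thesis by (simp add: Gk_def)
      qed
    qed
  qed
  finally show ?thesis .
qed

lemma mu_side:
  assumes mu_prob: "prob_space \<mu>" and mu_sets: "sets \<mu> = sets rg_space"
    and mu_graphs: "AE x in \<mu>. simple_graph (fst x) \<and> locally_finite (fst x)"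
  shows "(\<integral>x. fk p k x \<partial>\<mu>) \<le> measure (\<mu> \<Otimes>\<^sub>M perc_measure p) (Gk k)"
proof -
  interpret mu: prob_space \<mu> by (rule mu_prob)
  interpret PP: prob_space "perc_measure p" by (rule prob_space_perc)
  have meas: "fk p k \<in> borel_measurable \<mu>"
    using fk_meas measurable_cong_sets[OF mu_sets refl] by blast
  have int: "integrable \<mu> (fk p k)"
    by (rule mu.integrable_const_bound[where B=1]) (use fk_nonneg fk_le1 meas in auto)
  have Gs: "Gk k \<in> sets (\<mu> \<Otimes>\<^sub>M perc_measure p)"
    using Gk_sets[of k p] sets_pair_measure_cong[OF mu_sets refl, of "perc_measure p"]
    by (simp add: PSp_def)
  have "ennreal (\<integral>x. fk p k x \<partial>\<mu>) = (\<integral>\<^sup>+x. ennreal (fk p k x) \<partial>\<mu>)"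
    by (rule nn_integral_eq_integral[symmetric]) (use int fk_nonneg in auto)
  also have "\<dots> \<le> (\<integral>\<^sup>+x. emeasure (perc_measure p) (Pair x -` Gk k) \<partial>\<mu>)"
  proof (rule nn_integral_mono_AE)
    show "AE x in \<mu>. ennreal (fk p k x) \<le> emeasure (perc_measure p) (Pair x -` Gk k)"
      using mu_graphs
    proof eventually_elim
      case (elim x)
      obtain E v where x: "x = (E, v)" by (cases x)
      have "\<And>y. \<not> E y y" using elim by (simp add: x simple_graph_def)
      then have "fk p k x \<le> measure (perc_measure p) (Pair x -` Gk k)"
        using fk_le_slice[where p=p and k=k and E=E and v=v] elim by (simp add: x)
      then show ?case by (simp add: PP.emeasure_eq_measure)
    qed
  qed
  also have "\<dots> = emeasure (\<mu> \<Otimes>\<^sub>M perc_measure p) (Gk k)"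
    by (rule PP.emeasure_pair_measure_alt[symmetric]) (rule Gs)
  also have "\<dots> = ennreal (measure (\<mu> \<Otimes>\<^sub>M perc_measure p) (Gk k))"
    using finite_measure.emeasure_eq_measure[OF prob_space.finite_measure[OF prob_space_pair[OF mu_prob prob_space_perc]]] by simp
  finally show ?thesis using ennreal_le_iff[OF measure_nonneg] by blast
qed

lemma M_lim:
  assumes mu_prob: "prob_space \<mu>" and mu_sets: "sets \<mu> = sets rg_space"
  shows "(\<lambda>k. measure (\<mu> \<Otimes>\<^sub>M perc_measure p) (Gk k)) \<longlonglongrightarrow> zeta \<mu> p"
proof -
  interpret PR: prob_space "\<mu> \<Otimes>\<^sub>M perc_measure p" by (rule prob_space_pair[OF mu_prob prob_space_perc])
  have st: "sets (\<mu> \<Otimes>\<^sub>M perc_measure p) = sets (PSp p)"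
    using sets_pair_measure_cong[OF mu_sets refl, of "perc_measure p"] by (simp add: PSp_def)
  have dec: "decseq Gk"
    by (rule decseq_SucI) (auto simp: Gk_def)
  have inter: "(\<Inter>k. Gk k) = {((E, rt), \<omega>). infinite (cluster E \<omega> rt)}"
  proof (intro equalityI subsetI)
    fix z assume z: "z \<in> (\<Inter>k. Gk k)"
    have "infinite (cluster (fst (fst z)) (snd z) (snd (fst z)))"
    proof
      assume fin: "finite (cluster (fst (fst z)) (snd z) (snd (fst z)))"
      have "z \<in> Gk (Suc (card (cluster (fst (fst z)) (snd z) (snd (fst z)))))" using z by blast
      then show False using fin by (simp add: Gk_def)
    qed
    then show "z \<in> {((E, rt), \<omega>). infinite (cluster E \<omega> rt)}" by (auto simp: case_prod_beta)
  next
    fix z assume "z \<in> {((E, rt), \<omega>). infinite (cluster E \<omega> rt)}"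
    then show "z \<in> (\<Inter>k. Gk k)" by (auto simp: Gk_def case_prod_beta)
  qed
  have "(\<lambda>k. measure (\<mu> \<Otimes>\<^sub>M perc_measure p) (Gk k)) \<longlonglongrightarrow> measure (\<mu> \<Otimes>\<^sub>M perc_measure p) (\<Inter>k. Gk k)"
    by (rule PR.finite_Lim_measure_decseq) (use Gk_sets st dec in auto)
  then show ?thesis unfolding inter zeta_def .
qed

lemma prob_pair_pmf:
  "measure_pmf.prob (pair_pmf A B) S = (\<integral>a. measure_pmf.prob B {b. (a,b) \<in> S} \<partial>A)"
proof -
  have int: "integrable (measure_pmf A) (\<lambda>a. measure_pmf.prob B {b. (a,b) \<in> S})"
    by (rule measure_pmf.integrable_const_bound[where B=1]) auto
  have "ennreal (measure_pmf.prob (pair_pmf A B) S) = emeasure (pair_pmf A B) S"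
    by (simp add: measure_pmf.emeasure_eq_measure)
  also have "\<dots> = (\<integral>\<^sup>+x. indicator S x \<partial>pair_pmf A B)" by simp
  also have "\<dots> = (\<integral>\<^sup>+a. \<integral>\<^sup>+b. indicator S (a, b) \<partial>B \<partial>A)" by (rule nn_integral_pair_pmf')
  also have "\<dots> = (\<integral>\<^sup>+a. ennreal (measure_pmf.prob B {b. (a,b) \<in> S}) \<partial>A)"
  proof (rule nn_integral_cong)
    fix a
    have "(\<integral>\<^sup>+b. indicator S (a, b) \<partial>B) = (\<integral>\<^sup>+b. indicator {b. (a,b) \<in> S} b \<partial>B)"
      by (intro nn_integral_cong) (simp add: indicator_def)
    also have "\<dots> = emeasure B {b. (a,b) \<in> S}" by simp
    finally show "(\<integral>\<^sup>+b. indicator S (a, b) \<partial>B) = ennreal (measure_pmf.prob B {b. (a,b) \<in> S})"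
      by (simp add: measure_pmf.emeasure_eq_measure)
  qed
  also have "\<dots> = ennreal (\<integral>a. measure_pmf.prob B {b. (a,b) \<in> S} \<partial>A)"
    by (rule nn_integral_eq_integral[OF int]) auto
  finally show ?thesis by (simp add: ennreal_inj)
qed

lemma prob_bind_pmf:
  "measure_pmf.prob (bind_pmf M N) T = (\<integral>x. measure_pmf.prob (N x) T \<partial>M)"
proof -
  have int: "integrable (measure_pmf M) (\<lambda>x. measure_pmf.prob (N x) T)"
    by (rule measure_pmf.integrable_const_bound[where B=1]) auto
  have "ennreal (measure_pmf.prob (bind_pmf M N) T) = emeasure (bind_pmf M N) T"
    by (simp add: measure_pmf.emeasure_eq_measure)
  also have "\<dots> = (\<integral>\<^sup>+x. emeasure (N x) T \<partial>M)" by simp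
  also have "\<dots> = (\<integral>\<^sup>+x. ennreal (measure_pmf.prob (N x) T) \<partial>M)"
    by (simp add: measure_pmf.emeasure_eq_measure)
  also have "\<dots> = ennreal (\<integral>x. measure_pmf.prob (N x) T \<partial>M)"
    by (rule nn_integral_eq_integral[OF int]) auto
  finally show ?thesis by (simp add: ennreal_inj)
qed

lemma marg_fst:
  "measure_pmf.prob (pair_pmf X (pair_pmf U V)) {z. (fst z, fst (snd z)) \<in> A} = measure_pmf.prob (pair_pmf X U) A"
proof -
  have "map_pmf (\<lambda>(x, y). (id x, fst y)) (pair_pmf X (pair_pmf U V)) = pair_pmf X U"
    by (simp add: map_pair map_fst_pair_pmf)
  then have "measure_pmf.prob (pair_pmf X U) A = measure_pmf.prob (pair_pmf X (pair_pmf U V)) ((\<lambda>(x, y). (id x, fst y)) -` A)"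
    by (metis measure_map_pmf)
  also have "(\<lambda>(x, y). (id x, fst y)) -` A = {z. (fst z, fst (snd z)) \<in> A}" by auto
  finally show ?thesis by simp
qed

lemma marg_snd:
  "measure_pmf.prob (pair_pmf X (pair_pmf U V)) {z. (fst z, snd (snd z)) \<in> A} = measure_pmf.prob (pair_pmf X V) A"
proof -
  have "map_pmf (\<lambda>(x, y). (id x, snd y)) (pair_pmf X (pair_pmf U V)) = pair_pmf X V"
    by (simp add: map_pair map_snd_pair_pmf)
  then have "measure_pmf.prob (pair_pmf X V) A = measure_pmf.prob (pair_pmf X (pair_pmf U V)) ((\<lambda>(x, y). (id x, snd y)) -` A)"
    by (metis measure_map_pmf)
  also have "(\<lambda>(x, y). (id x, snd y)) -` A = {z. (fst z, snd (snd z)) \<in> A}" by auto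
  finally show ?thesis by simp
qed

lemma marg_pair_fst:
  "measure_pmf.prob (pair_pmf X U) {z. fst z \<in> A} = measure_pmf.prob X A"
proof -
  have "measure_pmf.prob X A = measure_pmf.prob (map_pmf fst (pair_pmf X U)) A"
    by (simp add: map_fst_pair_pmf)
  also have "\<dots> = measure_pmf.prob (pair_pmf X U) {z. fst z \<in> A}" by (simp add: vimage_def)
  finally show ?thesis by simp
qed

lemma limsup_to_0:
  fixes X :: "nat \<Rightarrow> nat \<Rightarrow> real" and B :: "nat \<Rightarrow> real"
  assumes nn: "\<And>k n. 0 \<le> X k n"
    and ev: "\<And>k \<epsilon>. \<epsilon> > 0 \<Longrightarrow> eventually (\<lambda>n. X k n \<le> B k + \<epsilon>) sequentially"
    and B: "B \<longlonglongrightarrow> 0"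
  shows "(\<lambda>k. limsup (\<lambda>n. ereal (X k n))) \<longlonglongrightarrow> 0"
proof (rule tendsto_sandwich[of "\<lambda>_. 0" _ _ "\<lambda>k. ereal (B k)"])
  show "\<forall>\<^sub>F k in sequentially. 0 \<le> limsup (\<lambda>n. ereal (X k n))"
    by (intro always_eventually allI le_Limsup) (auto simp: nn)
  show "\<forall>\<^sub>F k in sequentially. limsup (\<lambda>n. ereal (X k n)) \<le> ereal (B k)"
  proof (intro always_eventually allI)
    fix k
    show "limsup (\<lambda>n. ereal (X k n)) \<le> ereal (B k)"
    proof (rule ereal_le_epsilon2)
    fix e :: real assume "0 < e"
    have "limsup (\<lambda>n. ereal (X k n)) \<le> ereal (B k + e)"
      by (rule Limsup_bounded) (use ev[OF \<open>0 < e\<close>, of k] in \<open>auto elim: eventually_mono\<close>)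
    then show "limsup (\<lambda>n. ereal (X k n)) \<le> ereal (B k) + ereal e" by simp
  qed
  qed
  show "(\<lambda>_. 0::ereal) \<longlonglongrightarrow> 0" by simp
  show "(\<lambda>k. ereal (B k)) \<longlonglongrightarrow> 0" using B by (simp add: zero_ereal_def tendsto_ereal)
qed

lemma supp_X: "x \<in> set_pmf (perc_exp Gs p n) \<Longrightarrow> fst x \<in> set_pmf (Gs n)"
  by (auto simp: perc_exp_def)

lemma cluster_sub_n:
  assumes g: "graph_on n E" and v: "v < n"
  shows "cluster E \<omega> v \<subseteq> {..<n}"
proof
  fix w assume "w \<in> cluster E \<omega> v"
  then obtain m where "(perc E \<omega> ^^ m) v w" by (auto simp: cluster_def rtranclp_power)
  then have "(E ^^ m) v w" by (rule relpow_mono_rel[rotated]) (rule perc_le)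
  then show "w \<in> {..<n}" using relpow_graph_on[OF g _ v] by simp
qed

lemma cluster_same:
  assumes g: "graph_on n E" and vw: "v \<in> cluster E \<omega> w"
  shows "cluster E \<omega> v = cluster E \<omega> w"
proof -
  have sym: "symp (perc E \<omega>)"
    using g by (auto simp: symp_def perc_def graph_on_def simple_graph_def min_def max_def)
  have wv: "(perc E \<omega>)\<^sup>*\<^sup>* w v" using vw by (simp add: cluster_def)
  then have vw': "(perc E \<omega>)\<^sup>*\<^sup>* v w" using sym by (metis symp_rtranclp sympD)
  show ?thesis unfolding cluster_def using wv vw' by (auto intro: rtranclp_trans)
qed

lemma a_le_e:
  assumes Gs_on: "\<And>n E. E \<in> set_pmf (Gs n) \<Longrightarrow> graph_on n E" and n: "n \<ge> 1"
  shows "measure_pmf.prob (pair_pmf (perc_exp Gs p n) (pmf_of_set {..<n}))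
           {((E, \<omega>), v). k \<le> card (cluster E \<omega> v)}
     \<le> (\<integral>E. (\<Sum>v<n. fk p k (E, v)) / real n \<partial>Gs n)"
proof -
  let ?S = "{((E, \<omega>), v). k \<le> card (cluster E \<omega> v)}"
  let ?U = "pmf_of_set {..<n}"
  let ?X = "perc_exp Gs p n"
  have "(0::nat) \<in> {..<n}" using n by simp
  then have ne: "{..<n} \<noteq> {}" by blast
  have "measure_pmf.prob (pair_pmf ?X ?U) ?S = measure_pmf.prob (pair_pmf ?U ?X) ((\<lambda>(x, y). (y, x)) -` ?S)"
    by (subst pair_commute_pmf) simp
  also have "\<dots> = (\<integral>v. measure_pmf.prob ?X {x. (x, v) \<in> ?S} \<partial>?U)"
    by (simp add: prob_pair_pmf vimage_def)
  also have "\<dots> = (\<Sum>v<n. measure_pmf.prob ?X {x. (x, v) \<in> ?S}) / real n"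
    using ne by (simp add: integral_pmf_of_set)
  also have "\<dots> \<le> (\<Sum>v<n. \<integral>E. fk p k (E, v) \<partial>Gs n) / real n"
  proof (intro divide_right_mono sum_mono)
    fix v assume v: "v \<in> {..<n}"
    have "measure_pmf.prob ?X {x. (x, v) \<in> ?S}
        = (\<integral>E. measure_pmf.prob (map_pmf (Pair E) (perc_pmf n p)) {x. (x, v) \<in> ?S} \<partial>Gs n)"
      unfolding perc_exp_def by (rule prob_bind_pmf)
    also have "\<dots> = (\<integral>E. measure_pmf.prob (perc_pmf n p) {\<omega>. k \<le> card (cluster E \<omega> v)} \<partial>Gs n)"
      by (simp add: vimage_def)
    also have "\<dots> \<le> (\<integral>E. fk p k (E, v) \<partial>Gs n)"
    proof (rule integral_mono_AE)
      show "integrable (Gs n) (\<lambda>E. measure_pmf.prob (perc_pmf n p) {\<omega>. k \<le> card (cluster E \<omega> v)})"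
        by (rule measure_pmf.integrable_const_bound[where B=1]) auto
      show "integrable (Gs n) (\<lambda>E. fk p k (E, v))"
        by (rule measure_pmf.integrable_const_bound[where B=1]) (auto simp: fk_nonneg fk_le1)
      show "AE E in Gs n. measure_pmf.prob (perc_pmf n p) {\<omega>. k \<le> card (cluster E \<omega> v)} \<le> fk p k (E, v)"
        by (rule AE_pmfI) (use finite_side Gs_on v in auto)
    qed
    finally show "measure_pmf.prob ?X {x. (x, v) \<in> ?S} \<le> (\<integral>E. fk p k (E, v) \<partial>Gs n)" .
  qed simp
  also have "\<dots> = (\<integral>E. (\<Sum>v<n. fk p k (E, v)) / real n \<partial>Gs n)"
  proof -
    have "(\<integral>E. (\<Sum>v<n. fk p k (E, v)) \<partial>Gs n) = (\<Sum>v<n. \<integral>E. fk p k (E, v) \<partial>Gs n)"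
      by (rule Bochner_Integration.integral_sum) (rule measure_pmf.integrable_const_bound[where B=1], auto simp: fk_nonneg fk_le1)
    then show ?thesis by simp
  qed
  finally show ?thesis .
qed

lemma avg_le1: "(\<Sum>v<n. fk p k (E, v)) / real n \<le> 1"
proof (cases "n = 0")
  case False
  have "(\<Sum>v<n. fk p k (E, v)) \<le> (\<Sum>v<n. 1)" by (intro sum_mono) (simp add: fk_le1)
  then show ?thesis using False by simp
qed simp

lemma avg_nonneg: "0 \<le> (\<Sum>v<n. fk p k (E, v)) / real n"
  by (intro divide_nonneg_nonneg sum_nonneg) (auto simp: fk_nonneg)

lemma e_bound:
  assumes lwc: "lwc_in_prob Gs \<mu>" and eps: "\<epsilon> > 0"
  shows "eventually (\<lambda>n. (\<integral>E. (\<Sum>v<n. fk p k (E, v)) / real n \<partial>Gs n) \<le> (\<integral>x. fk p k x \<partial>\<mu>) + \<epsilon>) sequentially"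
proof -
  define I where "I = (\<integral>x. fk p k x \<partial>\<mu>)"
  define Z where "Z n E = (\<Sum>v<n. fk p k (E, v)) / real n" for n E
  define bad where "bad n = {E. \<bar>Z n E - I\<bar> > \<epsilon>/2}" for n
  have I0: "0 \<le> I" unfolding I_def by (rule integral_nonneg_AE) (simp add: fk_nonneg)
  have bnd: "bounded (range (fk p k))"
    unfolding bounded_iff using fk_nonneg fk_le1 by (auto intro!: exI[of _ 1])
  have "(\<lambda>n. measure_pmf.prob (Gs n) (bad n)) \<longlonglongrightarrow> 0"
    using lwc fk_local[of k p] fk_meas[of p k] bnd eps
    unfolding lwc_in_prob_def bad_def Z_def I_def by (meson half_gt_zero)
  then have ev: "eventually (\<lambda>n. measure_pmf.prob (Gs n) (bad n) < \<epsilon>/2) sequentially"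
    using eps by (intro order_tendstoD(2)) auto
  show ?thesis
    using ev
  proof eventually_elim
    case (elim n)
    have pw: "Z n E \<le> I + \<epsilon>/2 + indicator (bad n) E" for E
    proof (cases "E \<in> bad n")
      case True
      then show ?thesis using avg_le1[where p=p and k=k and n=n and E=E] I0 eps by (simp add: Z_def)
    next
      case False
      then have "\<bar>Z n E - I\<bar> \<le> \<epsilon>/2" by (simp add: bad_def not_less)
      then have "Z n E - I \<le> \<epsilon>/2" by (rule abs_le_D1)
      moreover have "0 \<le> (indicator (bad n) E :: real)" by simp
      ultimately show ?thesis by linarith
    qed
    have "(\<integral>E. Z n E \<partial>Gs n) \<le> (\<integral>E. I + \<epsilon>/2 + indicator (bad n) E \<partial>Gs n)"
    proof (rule integral_mono)
      show "integrable (Gs n) (Z n)"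
      proof (rule measure_pmf.integrable_const_bound[where B=1])
        show "AE x in Gs n. norm (Z n x) \<le> 1"
        proof (intro AE_pmfI)
          fix x
          have "0 \<le> Z n x" "Z n x \<le> 1" unfolding Z_def by (rule avg_nonneg, rule avg_le1)
          then show "norm (Z n x) \<le> 1" by simp
        qed
      qed simp
      show "integrable (Gs n) (\<lambda>E. I + \<epsilon>/2 + indicator (bad n) E)"
        by (rule measure_pmf.integrable_const_bound[where B="\<bar>I\<bar> + \<bar>\<epsilon>\<bar> + 1"]) (auto simp: indicator_def)
    qed (use pw in auto)
    also have "\<dots> = I + \<epsilon>/2 + measure_pmf.prob (Gs n) (bad n)"
      by (subst Bochner_Integration.integral_add) (auto simp: measure_pmf.integrable_const_bound[where B=1])
    also have "\<dots> \<le> I + \<epsilon>" using elim by simp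
    finally show ?case by (simp add: Z_def I_def)
  qed
qed

lemma C1_sub:
  assumes Gs_on: "\<And>n E. E \<in> set_pmf (Gs n) \<Longrightarrow> graph_on n E"
    and C1_largest: "\<And>n E \<omega>. n \<ge> 1 \<Longrightarrow> is_largest_cluster n E \<omega> (C1 n E \<omega>)"
    and n: "n \<ge> 1" and E: "E \<in> set_pmf (Gs n)"
  shows "C1 n E \<omega> \<subseteq> {..<n}"
proof -
  obtain w where "w < n" "C1 n E \<omega> = cluster E \<omega> w"
    using C1_largest[OF n, of E \<omega>] by (auto simp: is_largest_cluster_def)
  then show ?thesis using cluster_sub_n[OF Gs_on[OF E]] by simp
qed

lemma zeta_bounds:
  assumes "prob_space \<mu>"
  shows "0 \<le> zeta \<mu> p" "zeta \<mu> p \<le> 1"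
proof -
  interpret PR: prob_space "\<mu> \<Otimes>\<^sub>M perc_measure p" by (rule prob_space_pair[OF assms prob_space_perc])
  show "0 \<le> zeta \<mu> p" by (simp add: zeta_def)
  show "zeta \<mu> p \<le> 1" unfolding zeta_def by (rule PR.prob_le_1)
qed

lemma c_formula:
  assumes Gs_on: "\<And>n E. E \<in> set_pmf (Gs n) \<Longrightarrow> graph_on n E"
    and C1_largest: "\<And>n E \<omega>. n \<ge> 1 \<Longrightarrow> is_largest_cluster n E \<omega> (C1 n E \<omega>)"
    and n: "n \<ge> 1"
  shows "measure_pmf.prob (pair_pmf (perc_exp Gs p n) (pmf_of_set {..<n})) {((E, \<omega>), v). v \<in> C1 n E \<omega>}
       = (\<integral>x. real (card (C1 n (fst x) (snd x))) / real n \<partial>perc_exp Gs p n)"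
proof -
  have "(0::nat) \<in> {..<n}" using n by simp
  then have ne: "{..<n} \<noteq> {}" by blast
  have "measure_pmf.prob (pair_pmf (perc_exp Gs p n) (pmf_of_set {..<n})) {((E, \<omega>), v). v \<in> C1 n E \<omega>}
     = (\<integral>x. measure_pmf.prob (pmf_of_set {..<n}) {v. (x, v) \<in> {((E, \<omega>), v). v \<in> C1 n E \<omega>}} \<partial>perc_exp Gs p n)"
    by (rule prob_pair_pmf)
  also have "\<dots> = (\<integral>x. real (card (C1 n (fst x) (snd x))) / real n \<partial>perc_exp Gs p n)"
  proof (rule integral_cong_AE)
    show "AE x in perc_exp Gs p n. measure_pmf.prob (pmf_of_set {..<n}) {v. (x, v) \<in> {((E, \<omega>), v). v \<in> C1 n E \<omega>}}
            = real (card (C1 n (fst x) (snd x))) / real n"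
    proof (rule AE_pmfI)
      fix x assume x: "x \<in> set_pmf (perc_exp Gs p n)"
      have sub: "C1 n (fst x) (snd x) \<subseteq> {..<n}" using C1_sub[where Gs=Gs and ?C1.0=C1, OF Gs_on C1_largest n supp_X[OF x]] .
      have "{v. (x, v) \<in> {((E, \<omega>), v). v \<in> C1 n E \<omega>}} = C1 n (fst x) (snd x)"
        by (auto simp: case_prod_beta)
      then show "measure_pmf.prob (pmf_of_set {..<n}) {v. (x, v) \<in> {((E, \<omega>), v). v \<in> C1 n E \<omega>}}
            = real (card (C1 n (fst x) (snd x))) / real n"
        using sub ne by (simp add: measure_pmf_of_set Int_absorb1)
    qed
  qed simp_all
  finally show ?thesis .
qed

lemma c_bound:
  assumes Gs_on: "\<And>n E. E \<in> set_pmf (Gs n) \<Longrightarrow> graph_on n E"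
    and C1_largest: "\<And>n E \<omega>. n \<ge> 1 \<Longrightarrow> is_largest_cluster n E \<omega> (C1 n E \<omega>)"
    and giant: "converging_giant Gs \<mu> p C1" and mu_prob: "prob_space \<mu>"
    and eps: "\<epsilon> > 0"
  shows "eventually (\<lambda>n. zeta \<mu> p - \<epsilon> \<le> measure_pmf.prob (pair_pmf (perc_exp Gs p n) (pmf_of_set {..<n})) {((E, \<omega>), v). v \<in> C1 n E \<omega>}) sequentially"
proof -
  define z where "z = zeta \<mu> p"
  have z01: "0 \<le> z" "z \<le> 1" using zeta_bounds[OF mu_prob] by (auto simp: z_def)
  define Y where "Y n x = real (card (C1 n (fst x) (snd x))) / real n" for n x
  define bad where "bad n = {(E, \<omega>). \<bar>real (card (C1 n E \<omega>)) / real n - z\<bar> > \<epsilon>/2}" for n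
  have "(\<lambda>n. measure_pmf.prob (perc_exp Gs p n) (bad n)) \<longlonglongrightarrow> 0"
    using giant eps unfolding converging_giant_def bad_def z_def by (meson half_gt_zero)
  then have ev: "eventually (\<lambda>n. measure_pmf.prob (perc_exp Gs p n) (bad n) < \<epsilon>/2) sequentially"
    using eps by (intro order_tendstoD(2)) auto
  show ?thesis
    using ev eventually_ge_at_top[of 1]
  proof eventually_elim
    case (elim n)
    have Y01: "0 \<le> Y n x \<and> Y n x \<le> 1" if x: "x \<in> set_pmf (perc_exp Gs p n)" for x
    proof -
      have sub: "C1 n (fst x) (snd x) \<subseteq> {..<n}" using C1_sub[where Gs=Gs and ?C1.0=C1, OF Gs_on C1_largest elim(2) supp_X[OF x]] .
      have "card (C1 n (fst x) (snd x)) \<le> n" using card_mono[OF _ sub] by simp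
      then show ?thesis using elim(2) by (simp add: Y_def)
    qed
    have pw: "z - \<epsilon>/2 - indicator (bad n) x \<le> Y n x" if x: "x \<in> set_pmf (perc_exp Gs p n)" for x
    proof (cases "x \<in> bad n")
      case True
      then show ?thesis using Y01[OF x] z01 eps by simp
    next
      case False
      then have "\<bar>Y n x - z\<bar> \<le> \<epsilon>/2" by (auto simp: bad_def Y_def case_prod_beta not_less)
      then have "z - Y n x \<le> \<epsilon>/2" by (metis abs_le_D2 minus_diff_eq)
      moreover have "0 \<le> (indicator (bad n) x :: real)" by simp
      ultimately show ?thesis by linarith
    qed
    have "z - \<epsilon>/2 - measure_pmf.prob (perc_exp Gs p n) (bad n) = (\<integral>x. z - \<epsilon>/2 - indicator (bad n) x \<partial>perc_exp Gs p n)"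
      by (subst Bochner_Integration.integral_diff) (auto simp: measure_pmf.integrable_const_bound[where B=1])
    also have "\<dots> \<le> (\<integral>x. Y n x \<partial>perc_exp Gs p n)"
    proof (rule integral_mono_AE)
      show "integrable (perc_exp Gs p n) (\<lambda>x. z - \<epsilon>/2 - indicator (bad n) x)"
        by (rule measure_pmf.integrable_const_bound[where B="\<bar>z\<bar> + \<bar>\<epsilon>\<bar> + 1"]) (auto simp: indicator_def)
      show "integrable (perc_exp Gs p n) (Y n)"
      proof (rule measure_pmf.integrable_const_bound[where B=1])
        show "AE x in perc_exp Gs p n. norm (Y n x) \<le> 1"
          by (rule AE_pmfI) (use Y01 in auto)
      qed simp
      show "AE x in perc_exp Gs p n. z - \<epsilon>/2 - indicator (bad n) x \<le> Y n x"
        by (rule AE_pmfI) (rule pw)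
    qed
    also have "\<dots> = measure_pmf.prob (pair_pmf (perc_exp Gs p n) (pmf_of_set {..<n})) {((E, \<omega>), v). v \<in> C1 n E \<omega>}"
      using c_formula[OF Gs_on C1_largest elim(2)] by (simp add: Y_def)
    finally show ?case using elim(1) by (simp add: z_def)
  qed
qed

lemma d_bound:
  assumes giant: "converging_giant Gs \<mu> p C1" and zpos: "zeta \<mu> p > 0" and eps: "\<epsilon> > 0"
  shows "eventually (\<lambda>n. measure_pmf.prob (pair_pmf (perc_exp Gs p n) (pmf_of_set {..<n}))
            {((E, \<omega>), v). card (C1 n E \<omega>) < k} \<le> \<epsilon>) sequentially"
proof -
  define z where "z = zeta \<mu> p"
  define bad where "bad n = {(E, \<omega>). \<bar>real (card (C1 n E \<omega>)) / real n - z\<bar> > z/2}" for n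
  have "(\<lambda>n. measure_pmf.prob (perc_exp Gs p n) (bad n)) \<longlonglongrightarrow> 0"
    using giant zpos unfolding converging_giant_def bad_def z_def by (meson half_gt_zero)
  then have ev: "eventually (\<lambda>n. measure_pmf.prob (perc_exp Gs p n) (bad n) < \<epsilon>) sequentially"
    using eps by (intro order_tendstoD(2)) auto
  obtain N :: nat where N: "real N > 2 * real k / z" using reals_Archimedean2 by blast
  show ?thesis
    using ev eventually_ge_at_top[of "Suc N"]
  proof eventually_elim
    case (elim n)
    have npos: "real n > 0" using elim by simp
    have "{x. card (C1 n (fst x) (snd x)) < k} \<subseteq> bad n"
    proof
      fix x assume "x \<in> {x. card (C1 n (fst x) (snd x)) < k}"
      then have lt: "real (card (C1 n (fst x) (snd x))) < real k" by simp
      have "real n > 2 * real k / z" using N elim by linarith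
      then have "real k < z / 2 * real n" using zpos npos by (simp add: field_simps z_def)
      then have "real (card (C1 n (fst x) (snd x))) / real n < z / 2"
        using lt npos by (simp add: divide_less_eq)
      then have "z/2 < \<bar>real (card (C1 n (fst x) (snd x))) / real n - z\<bar>" by (simp only: z_def)
      then show "x \<in> bad n" by (auto simp: bad_def case_prod_beta)
    qed
    then have "measure_pmf.prob (perc_exp Gs p n) {x. card (C1 n (fst x) (snd x)) < k} \<le> measure_pmf.prob (perc_exp Gs p n) (bad n)"
      by (rule measure_pmf.finite_measure_mono) simp
    moreover have "measure_pmf.prob (pair_pmf (perc_exp Gs p n) (pmf_of_set {..<n})) {((E, \<omega>), v). card (C1 n E \<omega>) < k}
        = measure_pmf.prob (perc_exp Gs p n) {x. card (C1 n (fst x) (snd x)) < k}"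
    proof -
      have se: "{((E, \<omega>), v). card (C1 n E \<omega>) < k} = {z. fst z \<in> {x. card (C1 n (fst x) (snd x)) < k}}"
        by auto
      show ?thesis unfolding se by (rule marg_pair_fst)
    qed
    ultimately show ?case using elim(1) by linarith
  qed
qed

lemma pmf_subadd: "measure_pmf.prob P (A \<union> B) \<le> measure_pmf.prob P A + measure_pmf.prob P B"
  by (rule measure_subadditive) (auto simp: measure_pmf.emeasure_finite)

lemma supp_pair:
  assumes "z \<in> set_pmf (pair_pmf (perc_exp Gs p n) (pmf_of_set {..<n}))" "n \<ge> 1"
  shows "fst (fst z) \<in> set_pmf (Gs n)" "snd z < n"
proof -
  have "(0::nat) \<in> {..<n}" using assms(2) by simp
  then have ne: "{..<n} \<noteq> {}" by blast
  show "fst (fst z) \<in> set_pmf (Gs n)" using assms(1) supp_X by auto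
  show "snd z < n" using assms(1) ne by auto
qed

lemma in_C1_cluster:
  assumes Gs_on: "\<And>n E. E \<in> set_pmf (Gs n) \<Longrightarrow> graph_on n E"
    and C1_largest: "\<And>n E \<omega>. n \<ge> 1 \<Longrightarrow> is_largest_cluster n E \<omega> (C1 n E \<omega>)"
    and n: "n \<ge> 1" and E: "E \<in> set_pmf (Gs n)" and v: "v \<in> C1 n E \<omega>"
  shows "cluster E \<omega> v = C1 n E \<omega>"
proof -
  obtain w where "w < n" "C1 n E \<omega> = cluster E \<omega> w"
    using C1_largest[OF n, of E \<omega>] by (auto simp: is_largest_cluster_def)
  then show ?thesis using cluster_same[OF Gs_on[OF E]] v by simp
qed

lemma P1_decomp:
  assumes Gs_on: "\<And>n E. E \<in> set_pmf (Gs n) \<Longrightarrow> graph_on n E"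
    and C1_largest: "\<And>n E \<omega>. n \<ge> 1 \<Longrightarrow> is_largest_cluster n E \<omega> (C1 n E \<omega>)"
    and n: "n \<ge> 1"
  shows "measure_pmf.prob (pair_pmf (perc_exp Gs p n) (pmf_of_set {..<n}))
           {((E, \<omega>), v). v \<notin> C1 n E \<omega> \<and> card (cluster E \<omega> v) \<ge> k}
     \<le> measure_pmf.prob (pair_pmf (perc_exp Gs p n) (pmf_of_set {..<n})) {((E, \<omega>), v). card (cluster E \<omega> v) \<ge> k}
       - measure_pmf.prob (pair_pmf (perc_exp Gs p n) (pmf_of_set {..<n})) {((E, \<omega>), v). v \<in> C1 n E \<omega>}
       + measure_pmf.prob (pair_pmf (perc_exp Gs p n) (pmf_of_set {..<n})) {((E, \<omega>), v). card (C1 n E \<omega>) < k}"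
proof -
  let ?M = "pair_pmf (perc_exp Gs p n) (pmf_of_set {..<n})"
  define Big where "Big = {((E, \<omega>), v). card (cluster E \<omega> v) \<ge> k}"
  define In where "In = {((E, \<omega>), v). v \<in> C1 n E \<omega>}"
  define Sm where "Sm = {((E, \<omega>), v::nat). card (C1 n E \<omega>) < k}"
  have A1: "{((E, \<omega>), v). v \<notin> C1 n E \<omega> \<and> card (cluster E \<omega> v) \<ge> k} = Big - In"
    by (auto simp: Big_def In_def)
  have 1: "measure_pmf.prob ?M (Big - In) = measure_pmf.prob ?M Big - measure_pmf.prob ?M (Big \<inter> In)"
    by (rule measure_pmf.finite_measure_Diff') auto
  have sub: "In \<inter> set_pmf ?M \<subseteq> (Big \<inter> In) \<union> Sm"
  proof
    fix z assume z: "z \<in> In \<inter> set_pmf ?M"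
    obtain E \<omega> v where zz: "z = ((E, \<omega>), v)" by (metis prod.collapse)
    have E: "E \<in> set_pmf (Gs n)" using supp_pair(1)[of z Gs p n] z n by (simp add: zz)
    have vC: "v \<in> C1 n E \<omega>" using z by (simp add: zz In_def)
    have "cluster E \<omega> v = C1 n E \<omega>" by (rule in_C1_cluster[where Gs=Gs and ?C1.0=C1, OF Gs_on C1_largest n E vC])
    then show "z \<in> (Big \<inter> In) \<union> Sm" using vC by (auto simp: zz Big_def In_def Sm_def)
  qed
  have "measure_pmf.prob ?M In = measure_pmf.prob ?M (In \<inter> set_pmf ?M)" by (rule measure_Int_set_pmf[symmetric])
  also have "\<dots> \<le> measure_pmf.prob ?M ((Big \<inter> In) \<union> Sm)" by (rule measure_pmf.finite_measure_mono[OF sub]) simp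
  also have "\<dots> \<le> measure_pmf.prob ?M (Big \<inter> In) + measure_pmf.prob ?M Sm" by (rule pmf_subadd)
  finally have 2: "measure_pmf.prob ?M In \<le> measure_pmf.prob ?M (Big \<inter> In) + measure_pmf.prob ?M Sm" .
  show ?thesis unfolding A1 1 using 2 by (simp add: Big_def In_def Sm_def)
qed

lemma P3_pos:
  assumes Gs_on: "\<And>n E. E \<in> set_pmf (Gs n) \<Longrightarrow> graph_on n E"
    and C1_largest: "\<And>n E \<omega>. n \<ge> 1 \<Longrightarrow> is_largest_cluster n E \<omega> (C1 n E \<omega>)"
    and n: "n \<ge> 1"
  shows "measure_pmf.prob (pair_pmf (perc_exp Gs p n) (pair_pmf (pmf_of_set {..<n}) (pmf_of_set {..<n})))
              {((E, \<omega>), (u, v)). card (cluster E \<omega> u) \<ge> k \<and> card (cluster E \<omega> v) \<ge> k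
                                  \<and> cluster E \<omega> u \<noteq> cluster E \<omega> v}
    \<le> 2 * measure_pmf.prob (pair_pmf (perc_exp Gs p n) (pmf_of_set {..<n}))
           {((E, \<omega>), v). v \<notin> C1 n E \<omega> \<and> card (cluster E \<omega> v) \<ge> k}"
proof -
  let ?X = "perc_exp Gs p n" and ?U = "pmf_of_set {..<n}"
  let ?M = "pair_pmf ?X (pair_pmf ?U ?U)"
  define A1 where "A1 = {((E, \<omega>), v). v \<notin> C1 n E \<omega> \<and> card (cluster E \<omega> v) \<ge> k}"
  define S3 where "S3 = {((E, \<omega>), (u, v)). card (cluster E \<omega> u) \<ge> k \<and> card (cluster E \<omega> v) \<ge> k
                                  \<and> cluster E \<omega> u \<noteq> cluster E \<omega> v}"
  have sub: "S3 \<inter> set_pmf ?M \<subseteq> {z. (fst z, fst (snd z)) \<in> A1} \<union> {z. (fst z, snd (snd z)) \<in> A1}"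
  proof
    fix z assume z: "z \<in> S3 \<inter> set_pmf ?M"
    obtain E \<omega> u v where zz: "z = ((E, \<omega>), (u, v))" by (metis prod.collapse)
    have E: "E \<in> set_pmf (Gs n)" using z supp_X[of "(E, \<omega>)" Gs p n] by (auto simp: zz)
    have S: "card (cluster E \<omega> u) \<ge> k" "card (cluster E \<omega> v) \<ge> k" "cluster E \<omega> u \<noteq> cluster E \<omega> v"
      using z by (auto simp: zz S3_def)
    have "u \<notin> C1 n E \<omega> \<or> v \<notin> C1 n E \<omega>"
    proof (rule ccontr)
      assume "\<not> (u \<notin> C1 n E \<omega> \<or> v \<notin> C1 n E \<omega>)"
      then have "u \<in> C1 n E \<omega>" "v \<in> C1 n E \<omega>" by auto
      then have "cluster E \<omega> u = C1 n E \<omega>" "cluster E \<omega> v = C1 n E \<omega>"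
        using in_C1_cluster[where Gs=Gs and ?C1.0=C1, OF Gs_on C1_largest n E] by auto
      then show False using S(3) by simp
    qed
    then show "z \<in> {z. (fst z, fst (snd z)) \<in> A1} \<union> {z. (fst z, snd (snd z)) \<in> A1}"
      using S by (auto simp: zz A1_def)
  qed
  have "measure_pmf.prob ?M S3 = measure_pmf.prob ?M (S3 \<inter> set_pmf ?M)" by (rule measure_Int_set_pmf[symmetric])
  also have "\<dots> \<le> measure_pmf.prob ?M ({z. (fst z, fst (snd z)) \<in> A1} \<union> {z. (fst z, snd (snd z)) \<in> A1})"
    by (rule measure_pmf.finite_measure_mono[OF sub]) simp
  also have "\<dots> \<le> measure_pmf.prob ?M {z. (fst z, fst (snd z)) \<in> A1} + measure_pmf.prob ?M {z. (fst z, snd (snd z)) \<in> A1}"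
    by (rule pmf_subadd)
  also have "\<dots> = 2 * measure_pmf.prob (pair_pmf ?X ?U) A1"
    by (simp add: marg_fst marg_snd)
  finally show ?thesis by (simp add: S3_def A1_def)
qed

lemma P3_zero:
  shows "measure_pmf.prob (pair_pmf (perc_exp Gs p n) (pair_pmf (pmf_of_set {..<n}) (pmf_of_set {..<n})))
              {((E, \<omega>), (u, v)). card (cluster E \<omega> u) \<ge> k \<and> card (cluster E \<omega> v) \<ge> k
                                  \<and> cluster E \<omega> u \<noteq> cluster E \<omega> v}
    \<le> measure_pmf.prob (pair_pmf (perc_exp Gs p n) (pmf_of_set {..<n}))
           {((E, \<omega>), v). card (cluster E \<omega> v) \<ge> k}"
proof -
  let ?X = "perc_exp Gs p n" and ?U = "pmf_of_set {..<n}"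
  have "measure_pmf.prob (pair_pmf ?X (pair_pmf ?U ?U))
              {((E, \<omega>), (u, v)). card (cluster E \<omega> u) \<ge> k \<and> card (cluster E \<omega> v) \<ge> k
                                  \<and> cluster E \<omega> u \<noteq> cluster E \<omega> v}
      \<le> measure_pmf.prob (pair_pmf ?X (pair_pmf ?U ?U)) {z. (fst z, fst (snd z)) \<in> {((E, \<omega>), v). card (cluster E \<omega> v) \<ge> k}}"
    by (rule measure_pmf.finite_measure_mono) auto
  also have "\<dots> = measure_pmf.prob (pair_pmf ?X ?U) {((E, \<omega>), v). card (cluster E \<omega> v) \<ge> k}"
    by (rule marg_fst)
  finally show ?thesis .
qed

theorem proposition2p3:
  fixes p :: real
    and Gs :: "nat \<Rightarrow> graph pmf"
    and \<mu> :: "(graph \<times> nat) measure"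
    and C1 :: "nat \<Rightarrow> graph \<Rightarrow> perc_cfg \<Rightarrow> nat set"
  assumes p: "0 \<le> p" "p \<le> 1"
    and mu_prob: "prob_space \<mu>"
    and mu_sets: "sets \<mu> = sets rg_space"
    and mu_graphs: "AE x in \<mu>. simple_graph (fst x) \<and> locally_finite (fst x)"
    and Gs_on: "\<And>n E. E \<in> set_pmf (Gs n) \<Longrightarrow> graph_on n E"
    and C1_largest: "\<And>n E \<omega>. n \<ge> 1 \<Longrightarrow> is_largest_cluster n E \<omega> (C1 n E \<omega>)"
    and giant: "converging_giant Gs \<mu> p C1"
  shows
    "(zeta \<mu> p > 0 \<longrightarrow>
       (\<lambda>k. limsup (\<lambda>n. ereal (measure_pmf.prob
              (pair_pmf (perc_exp Gs p n) (pmf_of_set {..<n}))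
              {((E, \<omega>), v). v \<notin> C1 n E \<omega> \<and> card (cluster E \<omega> v) \<ge> k})))
         \<longlonglongrightarrow> 0)
   \<and> (zeta \<mu> p = 0 \<longrightarrow>
       (\<lambda>k. limsup (\<lambda>n. ereal (measure_pmf.prob
              (pair_pmf (perc_exp Gs p n) (pmf_of_set {..<n}))
              {((E, \<omega>), v). card (cluster E \<omega> v) \<ge> k})))
         \<longlonglongrightarrow> 0)
   \<and> (\<lambda>k. limsup (\<lambda>n. ereal (measure_pmf.prob
              (pair_pmf (perc_exp Gs p n) (pair_pmf (pmf_of_set {..<n}) (pmf_of_set {..<n})))
              {((E, \<omega>), (u, v)). card (cluster E \<omega> u) \<ge> k \<and> card (cluster E \<omega> v) \<ge> k
                                  \<and> cluster E \<omega> u \<noteq> cluster E \<omega> v})))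
         \<longlonglongrightarrow> 0"
proof -
  define z where "z = zeta \<mu> p"
  define Mk where "Mk k = measure (\<mu> \<Otimes>\<^sub>M perc_measure p) (Gk k)" for k
  have Mlim: "Mk \<longlonglongrightarrow> z" unfolding Mk_def z_def by (rule M_lim[OF mu_prob mu_sets])
  have z0: "0 \<le> z" using zeta_bounds[OF mu_prob] by (simp add: z_def)
  have lwc: "lwc_in_prob Gs \<mu>" using giant by (simp add: converging_giant_def)
  have a_ev: "eventually (\<lambda>n. measure_pmf.prob (pair_pmf (perc_exp Gs p n) (pmf_of_set {..<n}))
              {((E, \<omega>), v). card (cluster E \<omega> v) \<ge> k} \<le> Mk k + \<epsilon>) sequentially" if eps: "\<epsilon> > 0" for k \<epsilon>
    using e_bound[OF lwc eps, of p k] eventually_ge_at_top[of 1]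
  proof eventually_elim
    case (elim n)
    have "measure_pmf.prob (pair_pmf (perc_exp Gs p n) (pmf_of_set {..<n}))
              {((E, \<omega>), v). card (cluster E \<omega> v) \<ge> k} \<le> (\<integral>E. (\<Sum>v<n. fk p k (E, v)) / real n \<partial>Gs n)"
      by (rule a_le_e[where Gs=Gs, OF Gs_on elim(2)])
    also have "\<dots> \<le> (\<integral>x. fk p k x \<partial>\<mu>) + \<epsilon>" by (rule elim(1))
    also have "\<dots> \<le> Mk k + \<epsilon>" using mu_side[OF mu_prob mu_sets mu_graphs, of p k] by (simp add: Mk_def)
    finally show ?case .
  qed
  have c_ev: "eventually (\<lambda>n. z - \<epsilon> \<le> measure_pmf.prob (pair_pmf (perc_exp Gs p n) (pmf_of_set {..<n})) {((E, \<omega>), v). v \<in> C1 n E \<omega>}) sequentially"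
    if eps: "\<epsilon> > 0" for \<epsilon>
    unfolding z_def by (rule c_bound[where Gs=Gs and ?C1.0=C1 and \<mu>=\<mu> and p=p]) (fact Gs_on C1_largest giant mu_prob eps)+
  have d_ev: "eventually (\<lambda>n. measure_pmf.prob (pair_pmf (perc_exp Gs p n) (pmf_of_set {..<n}))
            {((E, \<omega>), v). card (C1 n E \<omega>) < k} \<le> \<epsilon>) sequentially"
    if eps: "\<epsilon> > 0" and zpos: "z > 0" for \<epsilon> k
    by (rule d_bound[where Gs=Gs and ?C1.0=C1 and \<mu>=\<mu> and p=p]) (use giant zpos eps in \<open>auto simp: z_def\<close>)
  have claim1: "(\<lambda>k. limsup (\<lambda>n. ereal (measure_pmf.prob
              (pair_pmf (perc_exp Gs p n) (pmf_of_set {..<n}))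
              {((E, \<omega>), v). v \<notin> C1 n E \<omega> \<and> card (cluster E \<omega> v) \<ge> k})))
         \<longlonglongrightarrow> 0" if zpos: "z > 0"
  proof (rule limsup_to_0[where B="\<lambda>k. Mk k - z"])
    show "(\<lambda>k. Mk k - z) \<longlonglongrightarrow> 0" using tendsto_diff[OF Mlim tendsto_const[of z]] by simp
  next
    fix k :: nat and \<epsilon> :: real assume eps: "\<epsilon> > 0"
    then have e3: "\<epsilon>/3 > 0" by simp
    show "eventually (\<lambda>n. measure_pmf.prob (pair_pmf (perc_exp Gs p n) (pmf_of_set {..<n}))
              {((E, \<omega>), v). v \<notin> C1 n E \<omega> \<and> card (cluster E \<omega> v) \<ge> k} \<le> Mk k - z + \<epsilon>) sequentially"
      using a_ev[OF e3, of k] c_ev[OF e3]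
        d_ev[OF e3 zpos, of k] eventually_ge_at_top[of 1]
    proof eventually_elim
      case (elim n)
      show ?case using P1_decomp[where Gs=Gs and ?C1.0=C1, OF Gs_on C1_largest elim(4), of p k] elim(1-3) by (simp add: z_def)
    qed
  qed simp
  have claim2: "(\<lambda>k. limsup (\<lambda>n. ereal (measure_pmf.prob
              (pair_pmf (perc_exp Gs p n) (pmf_of_set {..<n}))
              {((E, \<omega>), v). card (cluster E \<omega> v) \<ge> k})))
         \<longlonglongrightarrow> 0" if zz: "z = 0"
  proof (rule limsup_to_0[where B="Mk"])
    show "Mk \<longlonglongrightarrow> 0" using Mlim zz by simp
  next
    fix k :: nat and \<epsilon> :: real assume eps: "\<epsilon> > 0"
    show "eventually (\<lambda>n. measure_pmf.prob (pair_pmf (perc_exp Gs p n) (pmf_of_set {..<n}))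
              {((E, \<omega>), v). card (cluster E \<omega> v) \<ge> k} \<le> Mk k + \<epsilon>) sequentially"
      by (rule a_ev[OF eps])
  qed simp
  have claim3: "(\<lambda>k. limsup (\<lambda>n. ereal (measure_pmf.prob
              (pair_pmf (perc_exp Gs p n) (pair_pmf (pmf_of_set {..<n}) (pmf_of_set {..<n})))
              {((E, \<omega>), (u, v)). card (cluster E \<omega> u) \<ge> k \<and> card (cluster E \<omega> v) \<ge> k
                                  \<and> cluster E \<omega> u \<noteq> cluster E \<omega> v})))
         \<longlonglongrightarrow> 0"
  proof (cases "z > 0")
    case zpos: True
    show ?thesis
    proof (rule limsup_to_0[where B="\<lambda>k. 2 * (Mk k - z)"])
      show "(\<lambda>k. 2 * (Mk k - z)) \<longlonglongrightarrow> 0"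
        using tendsto_mult[OF tendsto_const[of 2] tendsto_diff[OF Mlim tendsto_const[of z]]] by simp
    next
      fix k :: nat and \<epsilon> :: real assume eps: "\<epsilon> > 0"
      then have e6: "\<epsilon>/6 > 0" by simp
      show "eventually (\<lambda>n. measure_pmf.prob
              (pair_pmf (perc_exp Gs p n) (pair_pmf (pmf_of_set {..<n}) (pmf_of_set {..<n})))
              {((E, \<omega>), (u, v)). card (cluster E \<omega> u) \<ge> k \<and> card (cluster E \<omega> v) \<ge> k
                                  \<and> cluster E \<omega> u \<noteq> cluster E \<omega> v} \<le> 2 * (Mk k - z) + \<epsilon>) sequentially"
        using a_ev[OF e6, of k] c_ev[OF e6]
          d_ev[OF e6 zpos, of k] eventually_ge_at_top[of 1]
      proof eventually_elim
        case (elim n)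
        show ?case using P1_decomp[where Gs=Gs and ?C1.0=C1, OF Gs_on C1_largest elim(4), of p k] P3_pos[where Gs=Gs and ?C1.0=C1, OF Gs_on C1_largest elim(4), of p k]
            elim(1-3) by (simp add: z_def)
      qed
    qed simp
  next
    case False
    then have zz: "z = 0" using z0 by simp
    show ?thesis
    proof (rule limsup_to_0[where B="Mk"])
      show "Mk \<longlonglongrightarrow> 0" using Mlim zz by simp
    next
      fix k :: nat and \<epsilon> :: real assume eps: "\<epsilon> > 0"
      show "eventually (\<lambda>n. measure_pmf.prob
              (pair_pmf (perc_exp Gs p n) (pair_pmf (pmf_of_set {..<n}) (pmf_of_set {..<n})))
              {((E, \<omega>), (u, v)). card (cluster E \<omega> u) \<ge> k \<and> card (cluster E \<omega> v) \<ge> k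
                                  \<and> cluster E \<omega> u \<noteq> cluster E \<omega> v} \<le> Mk k + \<epsilon>) sequentially"
        using a_ev[OF eps, of k]
      proof eventually_elim
        case (elim n)
        show ?case using P3_zero[of Gs p n k] elim by linarith
      qed
    qed simp
  qed
  show ?thesis using claim1 claim2 claim3 by (simp add: z_def)
qed

end
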